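(* Let $\mu$ be a continuous probability distribution supported on a compact set $\mathcal{X}\subset\mathbb{R}^2$ of Euclidean diameter at most $1$, and let $\mu_n$ be an empirical distribution of $\mu$ on $n$ samples. Then $\mathrm{RPW}_{2,1}(\mu,\mu_n)=\tilde O(n^{-1/3})$ with high probability.
   Context: The metric is the Euclidean distance $c$. For $p\in[1,\infty)$ and $\alpha\in[0,1]$, a partial transport plan of mass $\alpha$ between probability distributions $\mu,\nu$ is a nonnegative measure $\gamma$ on $\mathcal{X}\times\mathcal{X}$ of total mass $\alpha$ with first marginal $\le\mu$ and second marginal $\le\nu$ (setwise); its cost is $w_p(\gamma)=(\int c^p\,d\gamma)^{1/p}$, and $W_{p,\alpha}(\mu,\nu)$ is the infimum of $w_p(\gamma)$ over such $\gamma$. For $k\ge0$, $\mathrm{RPW}_{p,k}(\mu,\nu)=\inf\{\varepsilon\in[0,1]: W_{p,1-\varepsilon}(\mu,\nu)\le k\varepsilon\}$. An empirical distribution $\mu_n$ is $\frac1n\sum_{i=1}^n\delta_{x_i}$ with $x_1,\dots,x_n$ i.i.d. from $\mu$. $\tilde O(\cdot)$ hides polylogarithmic factors in $n$; "with high probability" means with probability at least $1-n^{-c}$ for some constant $c>0$. *)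

theory Defs
  imports "HOL-Probability.Probability"
begin

definition partial_plans :: "real \<Rightarrow> 'a::euclidean_space measure \<Rightarrow> 'a measure \<Rightarrow> ('a \<times> 'a) measure set" where
  "partial_plans \<alpha> \<mu> \<nu> = {\<gamma>. sets \<gamma> = sets borel \<and> emeasure \<gamma> (space \<gamma>) = ennreal \<alpha> \<and>
      (\<forall>A \<in> sets borel. emeasure \<gamma> (A \<times> UNIV) \<le> emeasure \<mu> A) \<and>
      (\<forall>B \<in> sets borel. emeasure \<gamma> (UNIV \<times> B) \<le> emeasure \<nu> B)}"

definition wcost :: "real \<Rightarrow> ('a::euclidean_space \<times> 'a) measure \<Rightarrow> ennreal" where
  "wcost p \<gamma> = (let I = (\<integral>\<^sup>+ z. ennreal (dist (fst z) (snd z) powr p) \<partial>\<gamma>)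
                 in if I = \<infinity> then \<infinity> else ennreal ((enn2real I) powr (1 / p)))"

definition partial_W :: "real \<Rightarrow> real \<Rightarrow> 'a::euclidean_space measure \<Rightarrow> 'a measure \<Rightarrow> ennreal" where
  "partial_W p \<alpha> \<mu> \<nu> = (INF \<gamma> \<in> partial_plans \<alpha> \<mu> \<nu>. wcost p \<gamma>)"

definition RPW :: "real \<Rightarrow> real \<Rightarrow> 'a::euclidean_space measure \<Rightarrow> 'a measure \<Rightarrow> real" where
  "RPW p k \<mu> \<nu> = Inf {\<epsilon> \<in> {0..1}. partial_W p (1 - \<epsilon>) \<mu> \<nu> \<le> ennreal (k * \<epsilon>)}"

definition empirical :: "nat \<Rightarrow> (nat \<Rightarrow> 'a::euclidean_space) \<Rightarrow> 'a measure" where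
  "empirical n x = distr (uniform_count_measure {..<n}) borel x"

end

theory Submission
  imports Defs
begin

definition anc :: "nat \<Rightarrow> int \<times> int \<Rightarrow> int \<times> int" where
  "anc k c = (fst c div 2^k, snd c div 2^k)"

lemma anc_anc: "anc k' (anc k c) = anc (k + k') c"
  by (simp add: anc_def power_add zdiv_zmult2_eq)

lemma anc_mono: "k \<le> k' \<Longrightarrow> anc k c = anc k c' \<Longrightarrow> anc k' c = anc k' c'"
  by (metis anc_anc le_add_diff_inverse)

locale hm =
  fixes S :: "(int \<times> int) set" and n :: nat and e :: "nat \<Rightarrow> int \<times> int" and p :: "int \<times> int \<Rightarrow> real"
  assumes finS: "finite S" and p_nn: "\<And>c. p c \<ge> 0"
begin

definition RR where "RR k r a = sum r {c\<in>S. anc k c = a}"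
definition DD where "DD k d a = sum d {i\<in>{..<n}. anc k (e i) = a}"
definition mm where "mm k r d a = min (RR k r a) (DD k d a)"
definition bm where "bm k r d c i = (if anc k c = anc k (e i)
   then r c * d i * (mm k r d (anc k c) / (RR k r (anc k c) * DD k d (anc k c))) else 0)"
definition stp where "stp k rd = (
   (\<lambda>c. fst rd c * (1 - mm k (fst rd) (snd rd) (anc k c) / RR k (fst rd) (anc k c))),
   (\<lambda>i. snd rd i * (1 - mm k (fst rd) (snd rd) (anc k (e i)) / DD k (snd rd) (anc k (e i)))))"

primrec st where
  "st 0 = (p, \<lambda>_. 1 / real n)"
| "st (Suc k) = stp k (st k)"

context
  fixes k :: nat and r :: "int \<times> int \<Rightarrow> real" and d :: "nat \<Rightarrow> real"
  assumes r_nn: "\<And>c. r c \<ge> 0" and d_nn: "\<And>i. d i \<ge> 0"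
begin

lemma RR_nn: "RR k r a \<ge> 0" unfolding RR_def by (intro sum_nonneg r_nn)
lemma DD_nn: "DD k d a \<ge> 0" unfolding DD_def by (intro sum_nonneg d_nn)
lemma mm_nn: "mm k r d a \<ge> 0" unfolding mm_def using RR_nn DD_nn by simp
lemma mm_le_R: "mm k r d a \<le> RR k r a" unfolding mm_def by simp
lemma mm_le_D: "mm k r d a \<le> DD k d a" unfolding mm_def by simp

lemma frac_R: "0 \<le> 1 - mm k r d a / RR k r a"
proof (cases "RR k r a = 0")
  case False
  then have "mm k r d a / RR k r a \<le> 1" using mm_le_R[of a] RR_nn[of a]
    by (simp add: divide_le_eq_1)
  then show ?thesis by simp
qed simp

lemma frac_D: "0 \<le> 1 - mm k r d a / DD k d a"
proof (cases "DD k d a = 0")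
  case False
  then have "mm k r d a / DD k d a \<le> 1" using mm_le_D[of a] DD_nn[of a]
    by (simp add: divide_le_eq_1)
  then show ?thesis by simp
qed simp

lemma bm_nn: "bm k r d c i \<ge> 0"
  unfolding bm_def using r_nn d_nn mm_nn RR_nn DD_nn by simp

lemma stp_r_nn: "fst (stp k (r, d)) c \<ge> 0"
  unfolding stp_def using r_nn frac_R by simp

lemma stp_d_nn: "snd (stp k (r, d)) i \<ge> 0"
  unfolding stp_def using d_nn frac_D by simp

lemma bm_nz: "bm k r d c i \<noteq> 0 \<Longrightarrow> anc k c = anc k (e i)"
  unfolding bm_def by (auto split: if_splits)

lemma row_sum: "sum (bm k r d c) {..<n} + fst (stp k (r, d)) c = r c"
proof -
  define a where "a = anc k c"
  have "sum (bm k r d c) {..<n} = (\<Sum>i\<in>{i\<in>{..<n}. anc k (e i) = a}. r c * (mm k r d a / (RR k r a * DD k d a)) * d i)"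
    unfolding bm_def a_def[symmetric] by (simp add: sum.inter_filter[symmetric] eq_commute mult_ac)
  also have "\<dots> = r c * (mm k r d a / (RR k r a * DD k d a)) * DD k d a"
    unfolding DD_def by (simp add: sum_distrib_left)
  also have "\<dots> = r c * (mm k r d a / RR k r a)"
  proof (cases "DD k d a = 0")
    case True then have "mm k r d a = 0" using mm_nn mm_le_D by (metis order_antisym)
    then show ?thesis using True by simp
  qed simp
  finally show ?thesis unfolding stp_def a_def by (simp add: algebra_simps)
qed

lemma col_sum: "sum (\<lambda>c. bm k r d c i) S + snd (stp k (r, d)) i = d i"
proof -
  define a where "a = anc k (e i)"
  have "sum (\<lambda>c. bm k r d c i) S = (\<Sum>c\<in>{c\<in>S. anc k c = a}. d i * (mm k r d a / (RR k r a * DD k d a)) * r c)"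
    unfolding bm_def a_def[symmetric] by (simp add: sum.inter_filter[symmetric] finS mult_ac cong: if_cong)
  also have "\<dots> = d i * (mm k r d a / (RR k r a * DD k d a)) * RR k r a"
    unfolding RR_def by (simp add: sum_distrib_left)
  also have "\<dots> = d i * (mm k r d a / DD k d a)"
  proof (cases "RR k r a = 0")
    case True then have "mm k r d a = 0" using mm_nn mm_le_R by (metis order_antisym)
    then show ?thesis using True by simp
  qed simp
  finally show ?thesis unfolding stp_def a_def by (simp add: algebra_simps)
qed

lemma RR_step: "RR k (fst (stp k (r, d))) a = RR k r a - mm k r d a"
proof -
  have "RR k (fst (stp k (r, d))) a = sum (fst (stp k (r, d))) {c\<in>S. anc k c = a}" by (simp only: RR_def)
  also have "\<dots> = (\<Sum>c\<in>{c\<in>S. anc k c = a}. r c * (1 - mm k r d a / RR k r a))"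
    by (intro sum.cong) (auto simp: stp_def)
  also have "\<dots> = RR k r a * (1 - mm k r d a / RR k r a)"
    unfolding RR_def by (simp add: sum_distrib_right)
  also have "\<dots> = RR k r a - mm k r d a"
  proof (cases "RR k r a = 0")
    case True then have "mm k r d a = 0" using mm_nn[of a] mm_le_R[of a] by linarith
    then show ?thesis using True by simp
  qed (simp add: algebra_simps)
  finally show ?thesis .
qed

lemma DD_step: "DD k (snd (stp k (r, d))) a = DD k d a - mm k r d a"
proof -
  have "DD k (snd (stp k (r, d))) a = sum (snd (stp k (r, d))) {i\<in>{..<n}. anc k (e i) = a}" by (simp only: DD_def)
  also have "\<dots> = (\<Sum>i\<in>{i\<in>{..<n}. anc k (e i) = a}. d i * (1 - mm k r d a / DD k d a))"
    by (intro sum.cong) (auto simp: stp_def)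
  also have "\<dots> = DD k d a * (1 - mm k r d a / DD k d a)"
    unfolding DD_def by (simp add: sum_distrib_right)
  also have "\<dots> = DD k d a - mm k r d a"
  proof (cases "DD k d a = 0")
    case True then have "mm k r d a = 0" using mm_nn[of a] mm_le_D[of a] by linarith
    then show ?thesis using True by simp
  qed (simp add: algebra_simps)
  finally show ?thesis .
qed

lemma diff_pres:
  assumes "k \<le> k'"
  shows "RR k' (fst (stp k (r, d))) a' - DD k' (snd (stp k (r, d))) a' = RR k' r a' - DD k' d a'"
proof -
  have fib: "(\<Sum>c\<in>{c\<in>S. anc k' c = a'}. bm k r d c i) = (if anc k' (e i) = a' then (\<Sum>c\<in>S. bm k r d c i) else 0)" for i
  proof -
    have "(\<Sum>c\<in>{c\<in>S. anc k' c = a'}. bm k r d c i) = (\<Sum>c\<in>S. if anc k' c = a' then bm k r d c i else 0)"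
      by (simp add: sum.inter_filter[symmetric] finS)
    also have "\<dots> = (\<Sum>c\<in>S. if anc k' (e i) = a' then bm k r d c i else 0)"
      by (intro sum.cong refl) (metis anc_mono[OF assms] bm_nz)
    finally show ?thesis by simp
  qed
  have "RR k' r a' - RR k' (fst (stp k (r, d))) a' = (\<Sum>c\<in>{c\<in>S. anc k' c = a'}. \<Sum>i<n. bm k r d c i)"
    unfolding RR_def sum_subtractf[symmetric] by (intro sum.cong refl) (metis (no_types, lifting) add_diff_cancel_right' mem_Collect_eq row_sum)
  also have "\<dots> = (\<Sum>i<n. \<Sum>c\<in>{c\<in>S. anc k' c = a'}. bm k r d c i)"
    by (rule sum.swap)
  also have "\<dots> = (\<Sum>i<n. if anc k' (e i) = a' then (\<Sum>c\<in>S. bm k r d c i) else 0)"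
    using fib by simp
  also have "\<dots> = (\<Sum>i\<in>{i\<in>{..<n}. anc k' (e i) = a'}. (\<Sum>c\<in>S. bm k r d c i))"
    by (simp add: sum.inter_filter[symmetric])
  also have "\<dots> = DD k' d a' - DD k' (snd (stp k (r, d))) a'"
    unfolding DD_def sum_subtractf[symmetric] by (intro sum.cong refl) (metis add_diff_cancel_right' col_sum)
  finally show ?thesis by simp
qed

end

abbreviation "rr k \<equiv> fst (st k)"
abbreviation "dd k \<equiv> snd (st k)"

lemma st_nn: "(\<forall>c. rr k c \<ge> 0) \<and> (\<forall>i. dd k i \<ge> 0)"
proof (induction k)
  case 0 then show ?case using p_nn by simp
next
  case (Suc k)
  then show ?case using stp_r_nn[of "rr k" "dd k" k] stp_d_nn[of "rr k" "dd k" k]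
    by (simp del: prod.collapse) (metis prod.collapse)
qed

lemma rr_nn: "rr k c \<ge> 0" using st_nn by blast
lemma dd_nn: "dd k i \<ge> 0" using st_nn by blast

lemma st_Suc': "st (Suc k) = stp k (rr k, dd k)" by simp

lemma inv: "k \<le> k' \<Longrightarrow> RR k' (rr k) a - DD k' (dd k) a = RR k' p a - DD k' (\<lambda>_. 1 / real n) a"
proof (induction k arbitrary: a)
  case 0 then show ?case by simp
next
  case (Suc k)
  have "RR k' (rr (Suc k)) a - DD k' (dd (Suc k)) a = RR k' (rr k) a - DD k' (dd k) a"
    unfolding st_Suc' by (rule diff_pres[OF rr_nn dd_nn]) (use Suc in simp)
  then show ?case using Suc by simp
qed

definition Delta where "Delta k = (\<Sum>a\<in>anc k ` S. \<bar>RR k p a - DD k (\<lambda>_. 1 / real n) a\<bar>)"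

lemma RR_after: "RR k (rr (Suc k)) a = max (RR k p a - DD k (\<lambda>_. 1 / real n) a) 0"
proof -
  have R: "RR k (rr (Suc k)) a = RR k (rr k) a - mm k (rr k) (dd k) a"
    unfolding st_Suc' by (rule RR_step[OF rr_nn dd_nn])
  have "RR k (rr k) a - DD k (dd k) a = RR k p a - DD k (\<lambda>_. 1 / real n) a"
    by (rule inv) simp
  with R show ?thesis unfolding mm_def by linarith
qed

lemma resid: "sum (rr (Suc k)) S \<le> Delta k"
proof -
  have "sum (rr (Suc k)) S = (\<Sum>a\<in>anc k ` S. RR k (rr (Suc k)) a)"
    unfolding RR_def by (rule sum.image_gen[OF finS])
  also have "\<dots> \<le> Delta k" unfolding Delta_def RR_after
    by (intro sum_mono) linarith
  finally show ?thesis .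
qed

definition bk where "bk k c i = bm k (rr k) (dd k) c i"

lemma bk_nn: "bk k c i \<ge> 0" unfolding bk_def by (rule bm_nn[OF rr_nn dd_nn])
lemma bk_nz: "bk k c i \<noteq> 0 \<Longrightarrow> anc k c = anc k (e i)" unfolding bk_def by (rule bm_nz[OF rr_nn dd_nn])

lemma bk_row: "c \<in> S \<Longrightarrow> (\<Sum>k<K. \<Sum>i<n. bk k c i) = p c - rr K c"
proof (induction K)
  case 0 then show ?case by simp
next
  case (Suc K)
  have "(\<Sum>i<n. bk K c i) + rr (Suc K) c = rr K c"
    unfolding bk_def st_Suc' by (rule row_sum[OF rr_nn dd_nn])
  then show ?case using Suc by simp
qed

lemma bk_col: "(\<Sum>k<K. \<Sum>c\<in>S. bk k c i) = 1 / real n - dd K i"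
proof (induction K)
  case 0 then show ?case by simp
next
  case (Suc K)
  have "(\<Sum>c\<in>S. bk K c i) + dd (Suc K) i = dd K i"
    unfolding bk_def st_Suc' by (rule col_sum[OF rr_nn dd_nn])
  then show ?case using Suc by simp
qed

lemma bk_mass_step: "(\<Sum>c\<in>S. \<Sum>i<n. bk k c i) = sum (rr k) S - sum (rr (Suc k)) S"
proof -
  have "(\<Sum>c\<in>S. \<Sum>i<n. bk k c i) = (\<Sum>c\<in>S. rr k c - rr (Suc k) c)"
  proof (intro sum.cong refl)
    fix c
    have "(\<Sum>i<n. bk k c i) + rr (Suc k) c = rr k c"
      unfolding bk_def st_Suc' by (rule row_sum[OF rr_nn dd_nn])
    then show "(\<Sum>i<n. bk k c i) = rr k c - rr (Suc k) c" by simp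
  qed
  then show ?thesis by (simp add: sum_subtractf)
qed

lemma bk_mass: "(\<Sum>k<K. \<Sum>c\<in>S. \<Sum>i<n. bk k c i) = sum p S - sum (rr K) S"
  by (induction K) (simp_all add: bk_mass_step)

lemma bk_cost:
  assumes W: "\<And>k. W k \<ge> (0::real)"
  shows "(\<Sum>k<Suc K. W k * (\<Sum>c\<in>S. \<Sum>i<n. bk k c i)) \<le> W 0 * sum p S + (\<Sum>j<K. W (Suc j) * Delta j)"
proof -
  have m0: "(\<Sum>c\<in>S. \<Sum>i<n. bk 0 c i) \<le> sum p S"
    unfolding bk_mass_step using sum_nonneg[of S "rr 1"] rr_nn by (simp add: st.simps(1)[of] del: st.simps(2))
  have mS: "(\<Sum>c\<in>S. \<Sum>i<n. bk (Suc j) c i) \<le> Delta j" for j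
    unfolding bk_mass_step using resid[of j] sum_nonneg[of S "rr (Suc (Suc j))"] rr_nn by (smt (verit) sum_nonneg)
  have "(\<Sum>k<Suc K. W k * (\<Sum>c\<in>S. \<Sum>i<n. bk k c i)) =
      W 0 * (\<Sum>c\<in>S. \<Sum>i<n. bk 0 c i) + (\<Sum>j<K. W (Suc j) * (\<Sum>c\<in>S. \<Sum>i<n. bk (Suc j) c i))"
    by (rule sum.lessThan_Suc_shift)
  also have "\<dots> \<le> W 0 * sum p S + (\<Sum>j<K. W (Suc j) * Delta j)"
    by (intro add_mono mult_left_mono m0 W sum_mono mS)
  finally show ?thesis .
qed

end

lemma sumP:
  fixes \<mu> :: "'a measure" and n :: nat
  assumes "sigma_finite_measure \<mu>" and F: "F \<in> borel_measurable (count_space {..<n} \<Otimes>\<^sub>M \<mu>)"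
  shows "integral\<^sup>N (count_space {..<n} \<Otimes>\<^sub>M \<mu>) F = (\<Sum>i<n. \<integral>\<^sup>+ y. F (i, y) \<partial>\<mu>)"
proof -
  have "integral\<^sup>N (count_space {..<n} \<Otimes>\<^sub>M \<mu>) F = (\<integral>\<^sup>+ i. \<integral>\<^sup>+ y. F (i, y) \<partial>\<mu> \<partial>count_space {..<n})"
    using sigma_finite_measure.nn_integral_fst[OF assms(1) F] by simp
  also have "\<dots> = (\<Sum>i<n. \<integral>\<^sup>+ y. F (i, y) \<partial>\<mu>)"
    by (rule nn_integral_count_space_finite) simp
  finally show ?thesis .
qed

lemma measP:
  fixes n :: nat
  assumes "\<And>i. i < n \<Longrightarrow> (\<lambda>y. F (i, y)) \<in> borel_measurable \<mu>"
  shows "F \<in> borel_measurable (count_space {..<n} \<Otimes>\<^sub>M \<mu>)"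
  by (rule measurable_pair_measure_countable1) (use assms in \<open>auto intro: countable_finite\<close>)

lemma plan_from_h:
  fixes \<mu> :: "(real^2) measure" and h :: "real^2 \<Rightarrow> nat \<Rightarrow> real" and x :: "nat \<Rightarrow> real^2"
  assumes P: "prob_space \<mu>" and sets_mu: "sets \<mu> = sets borel"
    and hmeas: "\<And>i. (\<lambda>y. h y i) \<in> borel_measurable \<mu>"
    and h_nn: "\<And>y i. h y i \<ge> 0"
    and row: "\<And>y. (\<Sum>i<n. h y i) \<le> 1"
    and col: "\<And>i. i < n \<Longrightarrow> (\<integral>\<^sup>+ y. h y i \<partial>\<mu>) \<le> ennreal (1 / real n)"
    and mass: "(\<Sum>i<n. \<integral>\<^sup>+ y. h y i \<partial>\<mu>) = ennreal (1 - \<epsilon>)"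
    and cost: "(\<Sum>i<n. \<integral>\<^sup>+ y. ennreal (h y i * (dist y (x i))\<^sup>2) \<partial>\<mu>) \<le> ennreal (\<epsilon>\<^sup>2)"
    and eps: "\<epsilon> \<ge> 0" "\<epsilon> \<le> 1"
  shows "partial_W 2 (1 - \<epsilon>) \<mu> (empirical n x) \<le> ennreal \<epsilon>"
proof -
  interpret prob_space \<mu> by fact
  have sf: "sigma_finite_measure \<mu>" by unfold_locales
  define Pm where "Pm = count_space {..<n} \<Otimes>\<^sub>M \<mu>"
  define f where "f = (\<lambda>z::nat \<times> (real^2). ennreal (h (snd z) (fst z)))"
  define g where "g = (\<lambda>z::nat \<times> (real^2). (snd z, x (fst z)))"
  define \<gamma> where "\<gamma> = distr (density Pm f) borel g"
  have fm: "f \<in> borel_measurable Pm" unfolding Pm_def f_def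
    by (rule measP) (auto intro!: measurable_compose[OF hmeas measurable_ennreal])
  have gi: "(\<lambda>y. (y, x i)) \<in> measurable \<mu> borel" for i
  proof -
    have "(\<lambda>y::real^2. (y, x i)) \<in> measurable borel borel"
      by (intro borel_measurable_continuous_onI continuous_intros)
    then show ?thesis using measurable_cong_sets[OF sets_mu refl] by blast
  qed
  have gm: "g \<in> measurable Pm borel" unfolding Pm_def g_def
    by (rule measurable_pair_measure_countable1) (use gi in \<open>auto intro: countable_finite\<close>)
  have gm': "g \<in> measurable (density Pm f) borel" using gm by simp
  have emT: "emeasure \<gamma> T = (\<Sum>i<n. \<integral>\<^sup>+ y. ennreal (h y i) * indicator T (y, x i) \<partial>\<mu>)"
    if T: "T \<in> sets borel" for T
  proof -
    have "emeasure \<gamma> T = emeasure (density Pm f) (g -` T \<inter> space Pm)"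
      unfolding \<gamma>_def by (subst emeasure_distr[OF gm' T]) simp
    also have "\<dots> = (\<integral>\<^sup>+ z. f z * indicator (g -` T \<inter> space Pm) z \<partial>Pm)"
      by (rule emeasure_density[OF fm]) (use gm T in auto)
    also have "\<dots> = (\<integral>\<^sup>+ z. f z * indicator T (g z) \<partial>Pm)"
      by (intro nn_integral_cong) (auto simp: indicator_def)
    also have "\<dots> = (\<Sum>i<n. \<integral>\<^sup>+ y. ennreal (h y i) * indicator T (y, x i) \<partial>\<mu>)"
      unfolding Pm_def
      by (subst sumP[OF sf]) (use fm gm T in \<open>auto simp: Pm_def f_def g_def\<close>)
    finally show ?thesis .
  qed
  have sets_g: "sets \<gamma> = sets borel" unfolding \<gamma>_def by simp
  have space_g: "space \<gamma> = UNIV" unfolding \<gamma>_def by simp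
  have mass_g: "emeasure \<gamma> (space \<gamma>) = ennreal (1 - \<epsilon>)"
    unfolding space_g by (subst emT) (simp_all add: mass)
  have marg1: "emeasure \<gamma> (A \<times> UNIV) \<le> emeasure \<mu> A" if A: "A \<in> sets borel" for A
  proof -
    have Am: "A \<in> sets \<mu>" using A sets_mu by simp
    have "emeasure \<gamma> (A \<times> UNIV) = (\<Sum>i<n. \<integral>\<^sup>+ y. ennreal (h y i) * indicator A y \<partial>\<mu>)"
      by (subst emT) (auto intro!: borel_Times A sum.cong nn_integral_cong simp: indicator_def)
    also have "\<dots> = (\<integral>\<^sup>+ y. (\<Sum>i<n. ennreal (h y i) * indicator A y) \<partial>\<mu>)"
      by (rule nn_integral_sum[symmetric]) (use hmeas Am in auto)
    also have "\<dots> \<le> (\<integral>\<^sup>+ y. indicator A y \<partial>\<mu>)"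
    proof (intro nn_integral_mono)
      fix y
      have "(\<Sum>i<n. ennreal (h y i) * indicator A y) = ennreal (\<Sum>i<n. h y i) * indicator A y"
        by (simp add: sum_distrib_right[symmetric] sum_ennreal h_nn)
      also have "\<dots> \<le> 1 * indicator A y"
        by (intro mult_right_mono) (use row[of y] in auto)
      finally show "(\<Sum>i<n. ennreal (h y i) * indicator A y) \<le> indicator A y" by simp
    qed
    also have "\<dots> = emeasure \<mu> A" using Am by simp
    finally show ?thesis .
  qed
  have marg2: "emeasure \<gamma> (UNIV \<times> B) \<le> emeasure (empirical n x) B" if B: "B \<in> sets borel" for B
  proof -
    have "emeasure \<gamma> (UNIV \<times> B) = (\<Sum>i<n. (\<integral>\<^sup>+ y. ennreal (h y i) \<partial>\<mu>) * indicator B (x i))"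
    proof -
      have "emeasure \<gamma> (UNIV \<times> B) = (\<Sum>i<n. \<integral>\<^sup>+ y. ennreal (h y i) * indicator B (x i) \<partial>\<mu>)"
        by (subst emT) (auto intro!: borel_Times B sum.cong nn_integral_cong simp: indicator_def)
      also have "\<dots> = (\<Sum>i<n. (\<integral>\<^sup>+ y. ennreal (h y i) \<partial>\<mu>) * indicator B (x i))"
        by (intro sum.cong refl nn_integral_multc) (auto intro: measurable_compose[OF hmeas measurable_ennreal])
      finally show ?thesis .
    qed
    also have "\<dots> \<le> (\<Sum>i<n. ennreal (1 / real n) * indicator B (x i))"
      by (intro sum_mono mult_right_mono col) auto
    also have "\<dots> = (\<Sum>i\<in>{i\<in>{..<n}. x i \<in> B}. ennreal (1 / real n))"
    proof -
      have "(\<Sum>i<n. ennreal (1 / real n) * indicator B (x i)) = (\<Sum>i<n. if x i \<in> B then ennreal (1 / real n) else 0)"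
        by (intro sum.cong) (auto simp: indicator_def)
      also have "\<dots> = (\<Sum>i\<in>{i\<in>{..<n}. x i \<in> B}. ennreal (1 / real n))"
        by (rule sum.inter_filter[symmetric]) simp
      finally show ?thesis .
    qed
    also have "\<dots> = of_nat (card {i\<in>{..<n}. x i \<in> B}) * ennreal (1 / real n)"
      by (rule sum_constant)
    also have "\<dots> = ennreal (card {i\<in>{..<n}. x i \<in> B} / real n)"
      by (simp add: ennreal_of_nat_eq_real_of_nat ennreal_mult[symmetric] divide_inverse)
    also have "\<dots> = emeasure (empirical n x) B"
    proof -
      have "emeasure (empirical n x) B = emeasure (uniform_count_measure {..<n}) (x -` B \<inter> {..<n})"
        unfolding empirical_def
        by (subst emeasure_distr) (auto simp: B sets_uniform_count_measure space_uniform_count_measure)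
      also have "\<dots> = card (x -` B \<inter> {..<n}) / card {..<n}"
        by (rule emeasure_uniform_count_measure) auto
      also have "x -` B \<inter> {..<n} = {i\<in>{..<n}. x i \<in> B}" by auto
      finally show ?thesis by (simp add: ennreal_of_nat_eq_real_of_nat divide_ennreal)
    qed
    finally show ?thesis .
  qed
  have plan: "\<gamma> \<in> partial_plans (1 - \<epsilon>) \<mu> (empirical n x)"
    unfolding partial_plans_def using sets_g mass_g marg1 marg2 by blast
  have dm: "(\<lambda>w::(real^2)\<times>(real^2). (dist (fst w) (snd w))^2) \<in> borel_measurable borel"
    by (intro borel_measurable_continuous_onI continuous_intros)
  have I: "(\<integral>\<^sup>+ z. ennreal (dist (fst z) (snd z) powr 2) \<partial>\<gamma>) \<le> ennreal (\<epsilon>\<^sup>2)"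
  proof -
    have "(\<integral>\<^sup>+ z. ennreal (dist (fst z) (snd z) powr 2) \<partial>\<gamma>)
       = (\<integral>\<^sup>+ z. ennreal (dist (fst (g z)) (snd (g z)) powr 2) \<partial>density Pm f)"
      unfolding \<gamma>_def by (rule nn_integral_distr[OF gm']) (simp, intro borel_measurable_continuous_onI continuous_intros)
    also have "\<dots> = (\<integral>\<^sup>+ z. f z * ennreal (dist (fst (g z)) (snd (g z)) powr 2) \<partial>Pm)"
      by (rule nn_integral_density[OF fm]) (simp add: measurable_compose[OF gm dm])
    also have "\<dots> = (\<Sum>i<n. \<integral>\<^sup>+ y. ennreal (h y i * (dist y (x i))\<^sup>2) \<partial>\<mu>)"
    proof -
      have hm[measurable]: "(\<lambda>y. h y i) \<in> borel_measurable borel" for i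
        using hmeas[of i] measurable_cong_sets[OF sets_mu refl] by blast
      have Fm: "(\<lambda>z. f z * ennreal (dist (fst (g z)) (snd (g z)) powr 2)) \<in> borel_measurable Pm"
        unfolding Pm_def f_def g_def by (rule measP) (simp add: measurable_cong_sets[OF sets_mu refl], measurable)
      show ?thesis unfolding Pm_def
        by (subst sumP[OF sf]) (use Fm in \<open>auto simp: Pm_def f_def g_def ennreal_mult h_nn intro!: sum.cong nn_integral_cong\<close>)
    qed
    also have "\<dots> \<le> ennreal (\<epsilon>\<^sup>2)" by (rule cost)
    finally show ?thesis .
  qed
  have "wcost 2 \<gamma> \<le> ennreal \<epsilon>"
  proof -
    let ?I = "(\<integral>\<^sup>+ z. ennreal (dist (fst z) (snd z) powr 2) \<partial>\<gamma>)"
    have fin: "?I \<noteq> \<infinity>" using I by (auto simp: top_unique)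
    have "enn2real ?I \<le> \<epsilon>\<^sup>2" using I by (simp add: enn2real_leI)
    then have "enn2real ?I powr (1/2) \<le> (\<epsilon>\<^sup>2) powr (1/2)"
      by (intro powr_mono2) auto
    also have "(\<epsilon>\<^sup>2) powr (1/2) = \<epsilon>" using eps by (simp add: powr_half_sqrt)
    finally show ?thesis unfolding wcost_def Let_def using fin by (simp add: ennreal_leI)
  qed
  then show ?thesis unfolding partial_W_def
    by (meson INF_lower2 plan)
qed

definition cellJ :: "nat \<Rightarrow> real^2 \<Rightarrow> real^2 \<Rightarrow> int \<times> int" where
  "cellJ J x0 y = (\<lfloor>2^J * (y$1 - x0$1)\<rfloor>, \<lfloor>2^J * (y$2 - x0$2)\<rfloor>)"

lemma div_eq_close:
  fixes t s :: real and m :: int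
  assumes "m > 0" "\<lfloor>t\<rfloor> div m = \<lfloor>s\<rfloor> div m"
  shows "\<bar>t - s\<bar> < m"
proof -
  define q where "q = \<lfloor>t\<rfloor> div m"
  have key: "m * (a div m) \<le> a \<and> a < m * (a div m) + m" for a :: int
    using assms(1) div_mult_mod_eq[of a m] pos_mod_sign[of m a] pos_mod_bound[of m a]
    by (smt (verit) mult.commute)
  have a1: "m * q \<le> \<lfloor>t\<rfloor>" "\<lfloor>t\<rfloor> < m * q + m" unfolding q_def using key by auto
  have a2: "m * q \<le> \<lfloor>s\<rfloor>" "\<lfloor>s\<rfloor> < m * q + m" unfolding q_def assms(2) using key by auto
  have "real_of_int (m*q) \<le> t" using a1(1) by linarith
  moreover have "t < real_of_int (m*q + m)" using a1(2) by linarith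
  moreover have "real_of_int (m*q) \<le> s" using a2(1) by linarith
  moreover have "s < real_of_int (m*q + m)" using a2(2) by linarith
  ultimately show ?thesis by simp
qed

lemma dist2_vec2: "(dist (y::real^2) z)\<^sup>2 = (y$1 - z$1)\<^sup>2 + (y$2 - z$2)\<^sup>2"
  unfolding dist_vec_def L2_set_def
  by (simp add: sum_2 dist_real_def power2_abs)

lemma cell_geom:
  assumes "anc k (cellJ J x0 y) = anc k (cellJ J x0 z)"
  shows "(dist y z)\<^sup>2 \<le> 2 * (2^k / 2^J)\<^sup>2"
proof -
  have m: "(2::int)^k > 0" by simp
  have c: "\<bar>y$j - z$j\<bar> < 2^k / 2^J" if j: "j = 1 \<or> j = 2" for j
  proof -
    have "\<lfloor>2^J * (y$j - x0$j)\<rfloor> div 2^k = \<lfloor>2^J * (z$j - x0$j)\<rfloor> div 2^k"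
      using assms j unfolding anc_def cellJ_def by auto
    from div_eq_close[OF m this]
    have "\<bar>2^J * (y$j - x0$j) - 2^J * (z$j - x0$j)\<bar> < 2^k" by simp
    moreover have "2^J * \<bar>y$j - z$j\<bar> = \<bar>2^J * (y$j - x0$j) - 2^J * (z$j - x0$j)\<bar>"
    proof -
      have "\<bar>2^J * (y$j - x0$j) - 2^J * (z$j - x0$j)\<bar> = \<bar>2^J * (y$j - z$j)\<bar>"
        by (simp add: algebra_simps)
      also have "\<dots> = 2^J * \<bar>y$j - z$j\<bar>" by (simp add: abs_mult)
      finally show ?thesis by simp
    qed
    ultimately have "2^J * \<bar>y$j - z$j\<bar> < 2^k" by simp
    then show ?thesis by (simp add: field_simps)
  qed
  have "(y$1 - z$1)\<^sup>2 \<le> (2^k / 2^J)\<^sup>2"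
    using c[of 1] by (metis abs_ge_zero less_imp_le power2_abs power_mono)
  moreover have "(y$2 - z$2)\<^sup>2 \<le> (2^k / 2^J)\<^sup>2"
    using c[of 2] by (metis abs_ge_zero less_imp_le power2_abs power_mono)
  ultimately show ?thesis unfolding dist2_vec2 by simp
qed

lemma cellJ_meas: "cellJ J x0 \<in> measurable borel (count_space UNIV)"
proof (subst measurable_count_space_eq2_countable, safe)
  fix a :: "int \<times> int"
  have f1: "(\<lambda>y::real^2. \<lfloor>2^J * (y$1 - x0$1)\<rfloor>) \<in> measurable borel (count_space UNIV)" by measurable
  have f2: "(\<lambda>y::real^2. \<lfloor>2^J * (y$2 - x0$2)\<rfloor>) \<in> measurable borel (count_space UNIV)" by measurable
  have "cellJ J x0 -` {a} = (\<lambda>y::real^2. \<lfloor>2^J * (y$1 - x0$1)\<rfloor>) -` {fst a} \<inter> (\<lambda>y::real^2. \<lfloor>2^J * (y$2 - x0$2)\<rfloor>) -` {snd a}"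
    by (auto simp: cellJ_def prod_eq_iff)
  moreover have "(\<lambda>y::real^2. \<lfloor>2^J * (y$1 - x0$1)\<rfloor>) -` {fst a} \<in> sets borel"
    using measurable_sets[OF f1, of "{fst a}"] by simp
  moreover have "(\<lambda>y::real^2. \<lfloor>2^J * (y$2 - x0$2)\<rfloor>) -` {snd a} \<in> sets borel"
    using measurable_sets[OF f2, of "{snd a}"] by simp
  ultimately show "cellJ J x0 -` {a} \<inter> space borel \<in> sets borel" by auto
qed auto

lemma IL:
  fixes \<mu> :: "(real^2) measure"
  assumes P: "prob_space \<mu>" and sets_mu: "sets \<mu> = sets borel" and finS: "finite S"
    and G: "\<And>c. G c \<ge> 0"
  shows "(\<integral>\<^sup>+ y. ennreal (if cellJ J x0 y \<in> S then G (cellJ J x0 y) else 0) \<partial>\<mu>)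
         = ennreal (\<Sum>c\<in>S. G c * measure \<mu> (cellJ J x0 -` {c}))"
proof -
  interpret prob_space \<mu> by fact
  have cm: "cellJ J x0 -` {c} \<in> sets \<mu>" for c
    using measurable_sets[OF cellJ_meas, of "{c}" J x0] sets_mu by simp
  have "(\<integral>\<^sup>+ y. ennreal (if cellJ J x0 y \<in> S then G (cellJ J x0 y) else 0) \<partial>\<mu>)
      = (\<integral>\<^sup>+ y. (\<Sum>c\<in>S. ennreal (G c) * indicator (cellJ J x0 -` {c}) y) \<partial>\<mu>)"
  proof (intro nn_integral_cong)
    fix y
    show "ennreal (if cellJ J x0 y \<in> S then G (cellJ J x0 y) else 0) =
          (\<Sum>c\<in>S. ennreal (G c) * indicator (cellJ J x0 -` {c}) y)"
    proof (cases "cellJ J x0 y \<in> S")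
      case True
      then have "(\<Sum>c\<in>S. ennreal (G c) * indicator (cellJ J x0 -` {c}) y) = ennreal (G (cellJ J x0 y))"
        by (subst sum.remove[OF finS True]) (auto intro!: sum.neutral simp: indicator_def)
      then show ?thesis using True by simp
    next
      case False
      then show ?thesis by (subst sum.neutral) (auto simp: indicator_def)
    qed
  qed
  also have "\<dots> = (\<Sum>c\<in>S. \<integral>\<^sup>+ y. ennreal (G c) * indicator (cellJ J x0 -` {c}) y \<partial>\<mu>)"
    by (rule nn_integral_sum) (use cm in auto)
  also have "\<dots> = (\<Sum>c\<in>S. ennreal (G c) * emeasure \<mu> (cellJ J x0 -` {c}))"
    by (intro sum.cong refl nn_integral_cmult_indicator cm)
  also have "\<dots> = (\<Sum>c\<in>S. ennreal (G c * measure \<mu> (cellJ J x0 -` {c})))"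
    by (simp add: emeasure_eq_measure ennreal_mult G)
  also have "\<dots> = ennreal (\<Sum>c\<in>S. G c * measure \<mu> (cellJ J x0 -` {c}))"
    by (rule sum_ennreal) (simp add: G)
  finally show ?thesis .
qed

lemma det_bound:
  fixes \<mu> :: "(real^2) measure" and x :: "nat \<Rightarrow> real^2" and n :: nat
  assumes P: "prob_space \<mu>" and sets_mu: "sets \<mu> = sets borel" and finS: "finite S"
    and full: "measure \<mu> (cellJ J x0 -` S) = 1"
    and npos: "n > 0"
    and pdef: "p = (\<lambda>c. measure \<mu> (cellJ J x0 -` {c}))"
    and DK: "hm.Delta S n (cellJ J x0 \<circ> x) p K \<le> \<epsilon>"
    and Cst: "2 * (1 / 2^J)\<^sup>2 + (\<Sum>j<K. 2 * (2^Suc j / 2^J)\<^sup>2 * hm.Delta S n (cellJ J x0 \<circ> x) p j) \<le> \<epsilon>\<^sup>2"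
    and eps: "0 \<le> \<epsilon>" "\<epsilon> \<le> 1"
  shows "partial_W 2 (1 - \<epsilon>) \<mu> (empirical n x) \<le> ennreal \<epsilon>"
proof -
  interpret prob_space \<mu> by fact
  define e where "e = cellJ J x0 \<circ> x"
  interpret H: hm S n e p
    by unfold_locales (auto simp: finS pdef)
  have DK': "H.Delta K \<le> \<epsilon>" using DK by (simp add: e_def)
  have sumpS: "sum p S = 1"
  proof -
    have "ennreal (sum p S) = (\<integral>\<^sup>+ y. ennreal (if cellJ J x0 y \<in> S then 1 else 0) \<partial>\<mu>)"
      using IL[OF P sets_mu finS, of "\<lambda>_. 1" J x0] by (simp add: pdef)
    also have "\<dots> = (\<integral>\<^sup>+ y. indicator (cellJ J x0 -` S) y \<partial>\<mu>)"
      by (intro nn_integral_cong) (auto simp: indicator_def)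
    also have "\<dots> = emeasure \<mu> (cellJ J x0 -` S)"
      using measurable_sets[OF cellJ_meas, of S J x0] sets_mu by simp
    also have "\<dots> = 1" using full by (simp add: emeasure_eq_measure)
    finally show ?thesis
      by (metis ennreal_1 ennreal_inj H.p_nn sum_nonneg zero_le_one)
  qed
  define B where "B c i = (\<Sum>k<Suc K. H.bk k c i)" for c i
  have B_nn: "B c i \<ge> 0" for c i unfolding B_def by (intro sum_nonneg H.bk_nn)
  have Brow: "(\<Sum>i<n. B c i) \<le> p c" if c: "c \<in> S" for c
  proof -
    have "(\<Sum>i<n. B c i) = (\<Sum>k<Suc K. \<Sum>i<n. H.bk k c i)" unfolding B_def by (rule sum.swap)
    also have "\<dots> = p c - H.rr (Suc K) c" by (rule H.bk_row[OF c])
    also have "\<dots> \<le> p c" using H.rr_nn[of "Suc K" c] by linarith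
    finally show ?thesis .
  qed
  have Bcol: "(\<Sum>c\<in>S. B c i) \<le> 1 / real n" for i
  proof -
    have "(\<Sum>c\<in>S. B c i) = (\<Sum>k<Suc K. \<Sum>c\<in>S. H.bk k c i)" unfolding B_def by (rule sum.swap)
    also have "\<dots> = 1 / real n - H.dd (Suc K) i" by (rule H.bk_col)
    also have "\<dots> \<le> 1 / real n" using H.dd_nn[of "Suc K" i] by linarith
    finally show ?thesis .
  qed
  have B0: "B c i = 0" if "c \<in> S" "p c = 0" "i < n" for c i
  proof -
    have "B c i \<le> (\<Sum>i<n. B c i)"
      by (rule member_le_sum) (use B_nn that in auto)
    then show ?thesis using Brow[of c] that B_nn[of c i] by simp
  qed
  define Mt where "Mt = (\<Sum>c\<in>S. \<Sum>i<n. B c i)"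
  have Mt_eq: "Mt = 1 - sum (H.rr (Suc K)) S"
  proof -
    have "Mt = (\<Sum>c\<in>S. \<Sum>k<Suc K. \<Sum>i<n. H.bk k c i)"
      unfolding Mt_def B_def by (intro sum.cong refl sum.swap)
    also have "\<dots> = (\<Sum>k<Suc K. \<Sum>c\<in>S. \<Sum>i<n. H.bk k c i)" by (rule sum.swap)
    also have "\<dots> = 1 - sum (H.rr (Suc K)) S" by (simp only: H.bk_mass sumpS)
    finally show ?thesis .
  qed
  have Mt_ge: "Mt \<ge> 1 - \<epsilon>" using Mt_eq H.resid[of K] DK' by simp
  define \<theta> where "\<theta> = (1 - \<epsilon>) / Mt"
  have th_nn: "\<theta> \<ge> 0" unfolding \<theta>_def using eps Mt_ge by simp
  have th_le: "\<theta> \<le> 1" unfolding \<theta>_def using eps Mt_ge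
    by (cases "Mt = 0") (simp_all add: divide_le_eq_1)
  have th_M: "\<theta> * Mt = 1 - \<epsilon>" unfolding \<theta>_def using eps Mt_ge
    by (cases "Mt = 0") simp_all
  define q where "q c i = (if p c = 0 then 0 else B c i / p c)" for c i
  have q_nn: "q c i \<ge> 0" for c i unfolding q_def using B_nn H.p_nn by simp
  define h where "h y i = \<theta> * (if cellJ J x0 y \<in> S then q (cellJ J x0 y) i else 0)" for y i
  have h_nn: "h y i \<ge> 0" for y i unfolding h_def using th_nn q_nn by simp
  have hmeas: "(\<lambda>y. h y i) \<in> borel_measurable \<mu>" for i
  proof -
    have "(\<lambda>y. (\<lambda>c. \<theta> * (if c \<in> S then q c i else 0)) (cellJ J x0 y)) \<in> borel_measurable borel"
      by (rule measurable_compose[OF cellJ_meas]) simp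
    then show ?thesis unfolding h_def measurable_cong_sets[OF sets_mu refl, of borel] by simp
  qed
  have row: "(\<Sum>i<n. h y i) \<le> 1" for y
  proof (cases "cellJ J x0 y \<in> S")
    case True
    define c where "c = cellJ J x0 y"
    have "(\<Sum>i<n. q c i) \<le> 1"
    proof (cases "p c = 0")
      case False
      then have "(\<Sum>i<n. q c i) = (\<Sum>i<n. B c i) / p c" unfolding q_def by (simp add: sum_divide_distrib)
      also have "\<dots> \<le> 1" using Brow[of c] True False H.p_nn[of c] unfolding c_def
        by (simp add: divide_le_eq_1)
      finally show ?thesis .
    qed (simp add: q_def)
    then have "(\<Sum>i<n. h y i) = \<theta> * (\<Sum>i<n. q c i)" unfolding h_def c_def using True by (simp add: sum_distrib_left)
    also have "\<dots> \<le> 1" using th_nn th_le \<open>(\<Sum>i<n. q c i) \<le> 1\<close> q_nn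
      by (meson mult_le_one sum_nonneg)
    finally show ?thesis .
  qed (simp add: h_def)
  have int_h: "(\<integral>\<^sup>+ y. h y i \<partial>\<mu>) = ennreal (\<theta> * (\<Sum>c\<in>S. B c i))" if i: "i < n" for i
  proof -
    have "(\<integral>\<^sup>+ y. h y i \<partial>\<mu>) = (\<integral>\<^sup>+ y. ennreal (if cellJ J x0 y \<in> S then \<theta> * q (cellJ J x0 y) i else 0) \<partial>\<mu>)"
      unfolding h_def by (intro nn_integral_cong) simp
    also have "\<dots> = ennreal (\<Sum>c\<in>S. \<theta> * q c i * p c)"
      unfolding pdef by (rule IL[OF P sets_mu finS]) (simp add: th_nn q_nn)
    also have "(\<Sum>c\<in>S. \<theta> * q c i * p c) = \<theta> * (\<Sum>c\<in>S. B c i)"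
      unfolding sum_distrib_left by (intro sum.cong refl) (auto simp: q_def B0 i)
    finally show ?thesis .
  qed
  have col: "(\<integral>\<^sup>+ y. h y i \<partial>\<mu>) \<le> ennreal (1 / real n)" if i: "i < n" for i
  proof -
    have "\<theta> * (\<Sum>c\<in>S. B c i) \<le> 1 * (1 / real n)"
      by (intro mult_mono th_le Bcol) (auto intro: sum_nonneg B_nn)
    then show ?thesis unfolding int_h[OF i] by (simp add: ennreal_leI)
  qed
  have mass: "(\<Sum>i<n. \<integral>\<^sup>+ y. h y i \<partial>\<mu>) = ennreal (1 - \<epsilon>)"
  proof -
    have "(\<Sum>i<n. \<integral>\<^sup>+ y. h y i \<partial>\<mu>) = (\<Sum>i<n. ennreal (\<theta> * (\<Sum>c\<in>S. B c i)))"
      by (intro sum.cong refl int_h) simp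
    also have "\<dots> = ennreal (\<Sum>i<n. \<theta> * (\<Sum>c\<in>S. B c i))"
      by (rule sum_ennreal) (auto intro!: mult_nonneg_nonneg th_nn sum_nonneg B_nn)
    also have "(\<Sum>i<n. \<theta> * (\<Sum>c\<in>S. B c i)) = \<theta> * Mt"
      unfolding Mt_def sum_distrib_left[symmetric] by (subst sum.swap) simp
    finally show ?thesis using th_M by simp
  qed
  define W where "W k = 2 * (2^k / 2^J :: real)\<^sup>2" for k
  have W_nn: "W k \<ge> 0" for k unfolding W_def by simp
  define Q where "Q c i = (\<Sum>k<Suc K. (if p c = 0 then 0 else H.bk k c i / p c) * W k)" for c i
  have Q_nn: "Q c i \<ge> 0" for c i unfolding Q_def by (intro sum_nonneg) (auto intro!: mult_nonneg_nonneg divide_nonneg_nonneg H.bk_nn W_nn H.p_nn)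
  have cost_i: "(\<integral>\<^sup>+ y. ennreal (h y i * (dist y (x i))\<^sup>2) \<partial>\<mu>) \<le> ennreal (\<theta> * (\<Sum>c\<in>S. \<Sum>k<Suc K. H.bk k c i * W k))" if i: "i < n" for i
  proof -
    have "(\<integral>\<^sup>+ y. ennreal (h y i * (dist y (x i))\<^sup>2) \<partial>\<mu>) \<le> (\<integral>\<^sup>+ y. ennreal (if cellJ J x0 y \<in> S then \<theta> * Q (cellJ J x0 y) i else 0) \<partial>\<mu>)"
    proof (intro nn_integral_mono ennreal_leI)
      fix y
      show "h y i * (dist y (x i))\<^sup>2 \<le> (if cellJ J x0 y \<in> S then \<theta> * Q (cellJ J x0 y) i else 0)"
      proof (cases "cellJ J x0 y \<in> S")
        case True
        define c where "c = cellJ J x0 y"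
        have "q c i * (dist y (x i))\<^sup>2 = (\<Sum>k<Suc K. (if p c = 0 then 0 else H.bk k c i / p c) * (dist y (x i))\<^sup>2)"
          unfolding q_def B_def by (cases "p c = 0") (simp_all add: sum_divide_distrib[symmetric] sum_distrib_right[symmetric] del: sum.lessThan_Suc)
        also have "\<dots> \<le> Q c i" unfolding Q_def
        proof (intro sum_mono)
          fix k
          show "(if p c = 0 then 0 else H.bk k c i / p c) * (dist y (x i))\<^sup>2 \<le> (if p c = 0 then 0 else H.bk k c i / p c) * W k"
          proof (cases "H.bk k c i = 0")
            case False
            then have "anc k c = anc k (cellJ J x0 (x i))" using H.bk_nz by (simp add: e_def)
            then have "(dist y (x i))\<^sup>2 \<le> W k" unfolding W_def c_def by (rule cell_geom)
            then show ?thesis using H.bk_nn[of k c i] H.p_nn[of c]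
              by (auto intro!: mult_left_mono divide_right_mono)
          qed simp
        qed
        finally have "q c i * (dist y (x i))\<^sup>2 \<le> Q c i" .
        then show ?thesis unfolding h_def c_def[symmetric] using True th_nn c_def
          by (simp add: mult.assoc mult_left_mono)
      qed (simp add: h_def)
    qed
    also have "\<dots> = ennreal (\<Sum>c\<in>S. \<theta> * Q c i * p c)"
      unfolding pdef by (rule IL[OF P sets_mu finS]) (simp add: th_nn Q_nn)
    also have "\<dots> \<le> ennreal (\<theta> * (\<Sum>c\<in>S. \<Sum>k<Suc K. H.bk k c i * W k))"
    proof (intro ennreal_leI)
      have "Q c i * p c \<le> (\<Sum>k<Suc K. H.bk k c i * W k)" for c
      proof (cases "p c = 0")
        case True then show ?thesis by (simp add: Q_def H.bk_nn W_nn sum_nonneg)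
      next
        case False
        then have "Q c i * p c = (\<Sum>k<Suc K. H.bk k c i * W k)"
          unfolding Q_def sum_distrib_right by (intro sum.cong refl) simp
        then show ?thesis by simp
      qed
      note QW = this
      have "(\<Sum>c\<in>S. \<theta> * Q c i * p c) = \<theta> * (\<Sum>c\<in>S. Q c i * p c)"
        by (simp add: sum_distrib_left mult.assoc)
      also have "\<dots> \<le> \<theta> * (\<Sum>c\<in>S. \<Sum>k<Suc K. H.bk k c i * W k)"
        by (intro mult_left_mono sum_mono th_nn QW)
      finally show "(\<Sum>c\<in>S. \<theta> * Q c i * p c) \<le> \<theta> * (\<Sum>c\<in>S. \<Sum>k<Suc K. H.bk k c i * W k)" .
    qed
    finally show ?thesis .
  qed
  have cost: "(\<Sum>i<n. \<integral>\<^sup>+ y. ennreal (h y i * (dist y (x i))\<^sup>2) \<partial>\<mu>) \<le> ennreal (\<epsilon>\<^sup>2)"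
  proof -
    have "(\<Sum>i<n. \<integral>\<^sup>+ y. ennreal (h y i * (dist y (x i))\<^sup>2) \<partial>\<mu>) \<le> (\<Sum>i<n. ennreal (\<theta> * (\<Sum>c\<in>S. \<Sum>k<Suc K. H.bk k c i * W k)))"
      by (intro sum_mono cost_i) simp
    also have "\<dots> = ennreal (\<Sum>i<n. \<theta> * (\<Sum>c\<in>S. \<Sum>k<Suc K. H.bk k c i * W k))"
      by (rule sum_ennreal) (intro mult_nonneg_nonneg th_nn sum_nonneg H.bk_nn W_nn)
    also have "\<dots> \<le> ennreal (\<epsilon>\<^sup>2)"
    proof (intro ennreal_leI)
      have "(\<Sum>i<n. \<theta> * (\<Sum>c\<in>S. \<Sum>k<Suc K. H.bk k c i * W k)) = \<theta> * (\<Sum>k<Suc K. W k * (\<Sum>c\<in>S. \<Sum>i<n. H.bk k c i))"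
      proof -
        have "(\<Sum>i<n. \<Sum>c\<in>S. \<Sum>k<Suc K. H.bk k c i * W k) = (\<Sum>c\<in>S. \<Sum>i<n. \<Sum>k<Suc K. H.bk k c i * W k)"
          by (rule sum.swap)
        also have "\<dots> = (\<Sum>c\<in>S. \<Sum>k<Suc K. \<Sum>i<n. H.bk k c i * W k)"
          by (intro sum.cong refl sum.swap)
        also have "\<dots> = (\<Sum>k<Suc K. \<Sum>c\<in>S. \<Sum>i<n. H.bk k c i * W k)"
          by (rule sum.swap)
        also have "\<dots> = (\<Sum>k<Suc K. W k * (\<Sum>c\<in>S. \<Sum>i<n. H.bk k c i))"
          by (simp add: sum_distrib_left sum_distrib_right mult.commute)
        finally show ?thesis by (simp add: sum_distrib_left[symmetric])
      qed
      also have "\<dots> \<le> (\<Sum>k<Suc K. W k * (\<Sum>c\<in>S. \<Sum>i<n. H.bk k c i))"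
      proof (rule mult_left_le_one_le)
        show "0 \<le> (\<Sum>k<Suc K. W k * (\<Sum>c\<in>S. \<Sum>i<n. H.bk k c i))"
          by (intro sum_nonneg mult_nonneg_nonneg W_nn H.bk_nn)
      qed (use th_nn th_le in auto)
      also have "\<dots> \<le> W 0 * sum p S + (\<Sum>j<K. W (Suc j) * H.Delta j)"
        by (rule H.bk_cost) (rule W_nn)
      also have "\<dots> \<le> \<epsilon>\<^sup>2" using Cst unfolding W_def sumpS by (simp add: e_def)
      finally show "(\<Sum>i<n. \<theta> * (\<Sum>c\<in>S. \<Sum>k<Suc K. H.bk k c i * W k)) \<le> \<epsilon>\<^sup>2" .
    qed
    finally show ?thesis .
  qed
  show ?thesis
    by (rule plan_from_h[OF P sets_mu hmeas h_nn row col mass cost eps])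
qed

lemma indep_coords:
  fixes \<mu> :: "'a measure" and n :: nat
  assumes P: "prob_space \<mu>" and n: "n > 0"
  shows "prob_space.indep_vars (PiM {..<n} (\<lambda>_. \<mu>)) (\<lambda>_. \<mu>)
           (\<lambda>i x. if i < n then x i else (SOME y. y \<in> space \<mu>)) {..<n}"
proof -
  let ?M = "PiM {..<n} (\<lambda>_. \<mu>)"
  interpret M: prob_space ?M by (rule prob_space_PiM) (use P in auto)
  interpret prob_space \<mu> by fact
  have ne: "space \<mu> \<noteq> {}" by (rule not_empty)
  have y0: "(SOME y. y \<in> space \<mu>) \<in> space \<mu>" using ne by (simp add: some_in_eq)
  let ?X = "\<lambda>i x. if i < n then x i else (SOME y. y \<in> space \<mu>)"
  have rv: "?X i \<in> measurable ?M \<mu>" for i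
    by (cases "i < n") (simp_all add: y0)
  have "distr ?M (PiM {..<n} (\<lambda>_. \<mu>)) (\<lambda>x. \<lambda>i\<in>{..<n}. ?X i x) = distr ?M ?M (\<lambda>x. x)"
    proof (intro distr_cong refl)
    fix x assume "x \<in> space ?M"
    then have "x \<in> extensional {..<n}" by (simp add: space_PiM PiE_def)
    then show "(\<lambda>i\<in>{..<n}. ?X i x) = x" by (simp add: restrict_def extensional_def fun_eq_iff)
  qed
  also have "\<dots> = ?M" by simp
  also have "\<dots> = PiM {..<n} (\<lambda>i. distr ?M \<mu> (?X i))"
  proof (intro PiM_cong refl)
    fix i assume "i \<in> {..<n}"
    then have "distr ?M \<mu> (?X i) = distr ?M \<mu> (\<lambda>x. x i)"
      by (intro distr_cong) auto
    also have "\<dots> = \<mu>" by (rule distr_PiM_component) (use P \<open>i \<in> {..<n}\<close> in auto)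
    finally show "\<mu> = distr ?M \<mu> (?X i)" by simp
  qed
  finally show ?thesis
    by (subst M.indep_vars_iff_distr_eq_PiM) (use n rv in auto)
qed

lemma hoeff_PiM:
  fixes \<mu> :: "'a measure" and f :: "'a \<Rightarrow> real" and n :: nat and t :: real
  assumes P: "prob_space \<mu>" and n: "n > 0" and fm: "f \<in> borel_measurable \<mu>"
    and fb: "\<And>y. \<bar>f y\<bar> \<le> 1" and t: "t \<ge> 0"
  shows "measure (PiM {..<n} (\<lambda>_. \<mu>)) {x \<in> space (PiM {..<n} (\<lambda>_. \<mu>)).
           (\<Sum>i<n. f (x i)) \<ge> n * (\<integral>y. f y \<partial>\<mu>) + n * t} \<le> exp (- (n * t\<^sup>2 / 2))"
proof -
  let ?M = "PiM {..<n} (\<lambda>_. \<mu>)"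
  interpret M: prob_space ?M by (rule prob_space_PiM) (use P in auto)
  interpret prob_space \<mu> by fact
  let ?Y = "\<lambda>i x. if i < n then x i else (SOME y. y \<in> space \<mu>)"
  define X where "X i x = f (?Y i x)" for i x
  have ind: "M.indep_vars (\<lambda>_. borel) X {..<n}"
    unfolding X_def by (rule M.indep_vars_compose2[OF indep_coords[OF P n]]) (use fm in simp)
  interpret H: Hoeffding_ineq ?M "{..<n}" X "\<lambda>_. -1" "\<lambda>_. 1" "\<Sum>i<n. M.expectation (X i)"
      proof unfold_locales
    show "M.indep_vars (\<lambda>_. borel) X {..<n}" by (rule ind)
    fix i
    show "AE x in ?M. X i x \<in> {-1..1}"
      by (rule AE_I2) (use fb in \<open>simp add: abs_le_iff X_def\<close>)
  qed simp
  have EX: "M.expectation (X i) = (\<integral>y. f y \<partial>\<mu>)" if i: "i < n" for i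
  proof -
    have "M.expectation (X i) = M.expectation (\<lambda>x. f (x i))"
      unfolding X_def by (intro Bochner_Integration.integral_cong) (auto simp: i)
    also have "\<dots> = integral\<^sup>L (distr ?M \<mu> (\<lambda>x. x i)) f"
      by (rule integral_distr[symmetric]) (use i fm in auto)
    also have "distr ?M \<mu> (\<lambda>x. x i) = \<mu>" by (rule distr_PiM_component) (use P i in auto)
    finally show ?thesis .
  qed
  have sumE: "(\<Sum>i<n. M.expectation (X i)) = n * (\<integral>y. f y \<partial>\<mu>)" using EX by simp
  have seteq: "{x \<in> space ?M. (\<Sum>i<n. f (x i)) \<ge> n * (\<integral>y. f y \<partial>\<mu>) + n * t}
      = {x \<in> space ?M. (\<Sum>i\<in>{..<n}. X i x) \<ge> (\<Sum>i<n. M.expectation (X i)) + n * t}"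
  proof -
    have "(\<Sum>i\<in>{..<n}. X i x) = (\<Sum>i<n. f (x i))" for x
      by (intro sum.cong) (simp_all add: X_def)
    then show ?thesis unfolding sumE by simp
  qed
  have Hb: "M.prob {x \<in> space ?M. (\<Sum>i\<in>{..<n}. X i x) \<ge> (\<Sum>i<n. M.expectation (X i)) + n * t}
      \<le> exp (-2 * (n * t)\<^sup>2 / (\<Sum>i\<in>{..<n}. (1 - -1)\<^sup>2))"
    by (rule H.Hoeffding_ineq_ge) (use n t in auto)
  have eq: "exp (-2 * (n * t)\<^sup>2 / (\<Sum>i\<in>{..<n}. (1 - -1 :: real)\<^sup>2)) = exp (- (n * t\<^sup>2 / 2))"
    using n by (simp add: power2_eq_square field_simps)
  show ?thesis unfolding seteq using Hb eq by linarith
qed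

definition fsig :: "nat \<Rightarrow> real^2 \<Rightarrow> nat \<Rightarrow> (int\<times>int) set \<Rightarrow> (int\<times>int \<Rightarrow> real) \<Rightarrow> real^2 \<Rightarrow> real" where
  "fsig J x0 k A \<sigma> y = (if anc k (cellJ J x0 y) \<in> A then \<sigma> (anc k (cellJ J x0 y)) else 0)"

lemma fsig_meas: "fsig J x0 k A \<sigma> \<in> borel_measurable borel"
proof -
  have "(\<lambda>y. (\<lambda>c. if anc k c \<in> A then \<sigma> (anc k c) else 0) (cellJ J x0 y)) \<in> borel_measurable borel"
    by (rule measurable_compose[OF cellJ_meas]) simp
  then show ?thesis unfolding fsig_def by simp
qed

lemma fsig_bound: "\<sigma> \<in> A \<rightarrow>\<^sub>E {-1, 1} \<Longrightarrow> \<bar>fsig J x0 k A \<sigma> y\<bar> \<le> 1"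
proof -
  assume s: "\<sigma> \<in> A \<rightarrow>\<^sub>E {-1, 1}"
  show ?thesis
  proof (cases "anc k (cellJ J x0 y) \<in> A")
    case True
    have "\<sigma> (anc k (cellJ J x0 y)) \<in> {-1, 1}" by (rule PiE_mem[OF s True])
    then show ?thesis unfolding fsig_def using True by auto
  qed (simp add: fsig_def)
qed

lemma fsig_int:
  fixes \<mu> :: "(real^2) measure"
  assumes P: "prob_space \<mu>" and sets_mu: "sets \<mu> = sets borel" and finS: "finite S"
    and full: "measure \<mu> (cellJ J x0 -` S) = 1"
    and pdef: "p = (\<lambda>c. measure \<mu> (cellJ J x0 -` {c}))"
  shows "(\<integral>y. fsig J x0 k (anc k ` S) \<sigma> y \<partial>\<mu>) = (\<Sum>a\<in>anc k ` S. \<sigma> a * hm.RR S k p a)"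
proof -
  interpret prob_space \<mu> by fact
  have cm: "cellJ J x0 -` {c} \<in> sets \<mu>" for c
    using measurable_sets[OF cellJ_meas, of "{c}" J x0] sets_mu by simp
  have ae: "AE y in \<mu>. cellJ J x0 y \<in> S" using AE_prob_1[OF full] by simp
  have "(\<integral>y. fsig J x0 k (anc k ` S) \<sigma> y \<partial>\<mu>) = (\<integral>y. (\<Sum>c\<in>S. \<sigma> (anc k c) * indicator (cellJ J x0 -` {c}) y) \<partial>\<mu>)"
  proof (rule integral_cong_AE)
    show "fsig J x0 k (anc k ` S) \<sigma> \<in> borel_measurable \<mu>"
      using fsig_meas measurable_cong_sets[OF sets_mu refl] by blast
    show "(\<lambda>y. \<Sum>c\<in>S. \<sigma> (anc k c) * indicator (cellJ J x0 -` {c}) y) \<in> borel_measurable \<mu>"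
      using cm by (intro borel_measurable_sum borel_measurable_times borel_measurable_const borel_measurable_indicator) auto
    show "AE y in \<mu>. fsig J x0 k (anc k ` S) \<sigma> y = (\<Sum>c\<in>S. \<sigma> (anc k c) * indicator (cellJ J x0 -` {c}) y)"
      using ae
    proof eventually_elim
      case (elim y)
      then have "(\<Sum>c\<in>S. \<sigma> (anc k c) * indicator (cellJ J x0 -` {c}) y) = \<sigma> (anc k (cellJ J x0 y))"
        by (subst sum.remove[OF finS elim]) (auto intro!: sum.neutral simp: indicator_def)
      then show ?case using elim unfolding fsig_def by auto
    qed
  qed
  also have "\<dots> = (\<Sum>c\<in>S. \<sigma> (anc k c) * p c)"
    by (subst Bochner_Integration.integral_sum)
       (auto simp: pdef cm less_top[symmetric] emeasure_eq_measure intro!: integrable_mult_right integrable_real_indicator)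
  also have "\<dots> = (\<Sum>a\<in>anc k ` S. \<Sum>c\<in>{c\<in>S. anc k c = a}. \<sigma> (anc k c) * p c)"
    by (rule sum.image_gen[OF finS])
  also have "\<dots> = (\<Sum>a\<in>anc k ` S. \<sigma> a * hm.RR S k p a)"
  proof -
    have hmSp: "hm S p" by unfold_locales (simp_all add: finS pdef)
    show ?thesis unfolding hm.RR_def[OF hmSp] sum_distrib_left by (intro sum.cong refl) auto
  qed
  finally show ?thesis .
qed

lemma hm_triv: "hm {} (\<lambda>_. 0::real)" by unfold_locales simp_all

lemma fsig_emp:
  fixes x :: "nat \<Rightarrow> real^2" and n :: nat
  assumes finS: "finite S" and n: "n > 0"
  shows "(\<Sum>i<n. fsig J x0 k (anc k ` S) \<sigma> (x i)) = n * (\<Sum>a\<in>anc k ` S. \<sigma> a * hm.DD n (cellJ J x0 \<circ> x) k (\<lambda>_. 1 / real n) a)"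
proof -
  let ?A = "anc k ` S"
  let ?t = "\<lambda>i. anc k (cellJ J x0 (x i))"
  let ?D = "hm.DD n (cellJ J x0 \<circ> x) k (\<lambda>_. 1 / real n)"
  have "n * (\<Sum>a\<in>?A. \<sigma> a * ?D a) = (\<Sum>a\<in>?A. n * (\<sigma> a * ?D a))"
    by (rule sum_distrib_left)
  also have "\<dots> = (\<Sum>a\<in>?A. \<Sum>i<n. if ?t i = a then \<sigma> a else 0)"
  proof (intro sum.cong refl)
    fix a
    have "?D a = card {i \<in> {..<n}. ?t i = a} / real n"
      by (simp add: hm.DD_def[OF hm_triv] Collect_conj_eq lessThan_def)
    moreover have "(\<Sum>i<n. if ?t i = a then \<sigma> a else 0) = card {i \<in> {..<n}. ?t i = a} * \<sigma> a"
      by (simp add: sum.If_cases Int_def)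
    ultimately show "n * (\<sigma> a * ?D a) = (\<Sum>i<n. if ?t i = a then \<sigma> a else 0)"
      using n by simp
  qed
  also have "\<dots> = (\<Sum>i<n. \<Sum>a\<in>?A. if ?t i = a then \<sigma> a else 0)" by (rule sum.swap)
  also have "\<dots> = (\<Sum>i<n. fsig J x0 k ?A \<sigma> (x i))"
    unfolding fsig_def by (intro sum.cong refl) (simp add: finS sum.delta)
  finally show ?thesis by simp
qed

lemma level_event:
  fixes \<mu> :: "(real^2) measure" and n :: nat and t :: real
  assumes P: "prob_space \<mu>" and sets_mu: "sets \<mu> = sets borel" and finS: "finite S"
    and full: "measure \<mu> (cellJ J x0 -` S) = 1"
    and pdef: "p = (\<lambda>c. measure \<mu> (cellJ J x0 -` {c}))"
    and n: "n > 0" and t: "t \<ge> 0"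
  shows "\<exists>E\<in>sets (PiM {..<n} (\<lambda>_. \<mu>)). (\<forall>x\<in>E. hm.Delta S n (cellJ J x0 \<circ> x) p k \<le> t) \<and>
     measure (PiM {..<n} (\<lambda>_. \<mu>)) (space (PiM {..<n} (\<lambda>_. \<mu>)) - E) \<le> 2 ^ card (anc k ` S) * exp (- (n * t\<^sup>2 / 2))"
proof -
  let ?M = "PiM {..<n} (\<lambda>_. \<mu>)"
  interpret M: prob_space ?M by (rule prob_space_PiM) (use P in auto)
  have hmSp: "hm S p" by unfold_locales (simp_all add: finS pdef)
  define A where "A = anc k ` S"
  have finA: "finite A" unfolding A_def using finS by simp
  define Sig where "Sig = A \<rightarrow>\<^sub>E {-1, 1::real}"
  have finSig: "finite Sig" unfolding Sig_def using finA by (intro finite_PiE) auto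
  have cardSig: "card Sig = 2 ^ card A" unfolding Sig_def using finA by (simp add: card_PiE, metis numeral_2_eq_2)
  define Bad where "Bad \<sigma> = {x \<in> space ?M. (\<Sum>i<n. fsig J x0 k A \<sigma> (x i)) \<ge> n * (\<integral>y. fsig J x0 k A \<sigma> y \<partial>\<mu>) + n * t}" for \<sigma>
  have fm: "fsig J x0 k A \<sigma> \<in> borel_measurable \<mu>" for \<sigma>
    using fsig_meas measurable_cong_sets[OF sets_mu refl] by blast
  have gm: "(\<lambda>x. \<Sum>i<n. fsig J x0 k A \<sigma> (x i)) \<in> borel_measurable ?M" for \<sigma>
  proof (intro borel_measurable_sum)
    fix i assume "i \<in> {..<n}"
    then show "(\<lambda>x. fsig J x0 k A \<sigma> (x i)) \<in> borel_measurable ?M"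
      using measurable_compose[OF measurable_component_singleton[of i "{..<n}" "\<lambda>_. \<mu>"] fm[of \<sigma>]] by simp
  qed
  have Bad_sets: "Bad \<sigma> \<in> sets ?M" for \<sigma>
    unfolding Bad_def using gm[of \<sigma>] by measurable
  have Bad_prob: "measure ?M (Bad \<sigma>) \<le> exp (- (n * t\<^sup>2 / 2))" if "\<sigma> \<in> Sig" for \<sigma>
    unfolding Bad_def
  proof (rule hoeff_PiM[OF P n fm _ t])
    show "\<bar>fsig J x0 k A \<sigma> y\<bar> \<le> 1" for y using that unfolding Sig_def by (rule fsig_bound)
  qed
  define E where "E = space ?M - (\<Union>\<sigma>\<in>Sig. Bad \<sigma>)"
  have E_sets: "E \<in> sets ?M" unfolding E_def using Bad_sets finSig by auto
  have compl: "space ?M - E = (\<Union>\<sigma>\<in>Sig. Bad \<sigma>)" unfolding E_def Bad_def by auto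
  have "measure ?M (space ?M - E) \<le> (\<Sum>\<sigma>\<in>Sig. measure ?M (Bad \<sigma>))"
    unfolding compl by (rule measure_UNION_le[OF finSig]) (use Bad_sets in auto)
  also have "\<dots> \<le> (\<Sum>\<sigma>\<in>Sig. exp (- (n * t\<^sup>2 / 2)))" by (intro sum_mono Bad_prob)
  also have "\<dots> = 2 ^ card A * exp (- (n * t\<^sup>2 / 2))" by (simp add: cardSig)
  finally have prob: "measure ?M (space ?M - E) \<le> 2 ^ card A * exp (- (n * t\<^sup>2 / 2))" .
  have good: "hm.Delta S n (cellJ J x0 \<circ> x) p k \<le> t" if x: "x \<in> E" for x
  proof -
    let ?R = "\<lambda>a. hm.RR S k p a"
    let ?D = "\<lambda>a. hm.DD n (cellJ J x0 \<circ> x) k (\<lambda>_. 1 / real n) a"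
    define \<sigma> where "\<sigma> = restrict (\<lambda>a. if ?R a \<le> ?D a then 1 else -1::real) A"
    have sS: "\<sigma> \<in> Sig" unfolding \<sigma>_def Sig_def by auto
    then have "x \<notin> Bad \<sigma>" using x unfolding E_def by auto
    moreover have "x \<in> space ?M" using x unfolding E_def by auto
    ultimately have lt: "(\<Sum>i<n. fsig J x0 k A \<sigma> (x i)) < n * (\<integral>y. fsig J x0 k A \<sigma> y \<partial>\<mu>) + n * t"
      unfolding Bad_def by auto
    have "n * (\<Sum>a\<in>A. \<sigma> a * ?D a) < n * (\<Sum>a\<in>A. \<sigma> a * ?R a) + n * t"
      using lt unfolding A_def fsig_emp[OF finS n] fsig_int[OF P sets_mu finS full pdef] .
    then have "(\<Sum>a\<in>A. \<sigma> a * ?D a) < (\<Sum>a\<in>A. \<sigma> a * ?R a) + t"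
      using n by (simp add: distrib_left[symmetric])
    moreover have "(\<Sum>a\<in>A. \<sigma> a * ?D a) - (\<Sum>a\<in>A. \<sigma> a * ?R a) = (\<Sum>a\<in>A. \<bar>?R a - ?D a\<bar>)"
      unfolding sum_subtractf[symmetric] by (intro sum.cong refl) (auto simp: \<sigma>_def)
    moreover have "hm.Delta S n (cellJ J x0 \<circ> x) p k = (\<Sum>a\<in>A. \<bar>?R a - ?D a\<bar>)"
      unfolding hm.Delta_def[OF hmSp] A_def ..
    ultimately show ?thesis by linarith
  qed
  show ?thesis using E_sets good prob unfolding A_def by blast
qed

lemma RPW_le:
  assumes "0 \<le> \<epsilon>" "\<epsilon> \<le> 1" "partial_W 2 (1 - \<epsilon>) \<mu> \<nu> \<le> ennreal \<epsilon>"
  shows "RPW 2 1 \<mu> \<nu> \<le> \<epsilon>"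
  unfolding RPW_def
  by (rule cInf_lower) (use assms in \<open>auto intro!: bdd_belowI[of _ 0]\<close>)

lemma RPW_le1:
  fixes \<mu> \<nu> :: "'a::euclidean_space measure"
  shows "RPW 2 1 \<mu> \<nu> \<le> 1"
proof (rule RPW_le)
  let ?g = "null_measure (borel :: ('a \<times> 'a) measure)"
  have "?g \<in> partial_plans (1 - 1) \<mu> \<nu>"
    unfolding partial_plans_def by simp
  moreover have "wcost 2 ?g = 0"
    unfolding wcost_def by simp
  ultimately show "partial_W 2 (1 - 1) \<mu> \<nu> \<le> ennreal 1"
    unfolding partial_W_def by (metis INF_lower2 ennreal_1 zero_le)
qed auto

lemma anc_box:
  assumes "k \<le> J" "c \<in> {-(2^J)..2^J} \<times> {-(2^J)..(2^J::int)}"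
  shows "anc k c \<in> {-(2^(J-k))..2^(J-k)} \<times> {-(2^(J-k))..(2^(J-k)::int)}"
proof -
  have e: "(2::int)^J = 2^(J-k) * 2^k" using assms(1) by (simp flip: power_add)
  have d1: "(2::int)^J div 2^k = 2^(J-k)" unfolding e by simp
  have d2: "(- ((2::int)^J)) div 2^k = - (2^(J-k))"
  proof -
    have "((- ((2::int)^(J-k))) * 2^k) div 2^k = - (2^(J-k))"
      by (rule nonzero_mult_div_cancel_right) simp
    then show ?thesis unfolding e by (simp only: minus_mult_left)
  qed
  have "a div 2^k \<in> {-(2^(J-k))..2^(J-k)}" if "a \<in> {-(2^J)..(2^J::int)}" for a
    using that zdiv_mono1[of a "2^J" "2^k"] zdiv_mono1[of "-(2^J)" a "2^k"] d1 d2 by auto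
  then show ?thesis using assms(2) unfolding anc_def by (auto simp: mem_Times_iff)
qed

lemma card_anc_box:
  assumes "k \<le> J"
  shows "real (card (anc k ` ({-(2^J)..2^J} \<times> {-(2^J)..(2^J::int)}))) \<le> 9 * (2^J / 2^k)\<^sup>2"
proof -
  let ?B = "{-((2::int)^(J-k))..2^(J-k)} \<times> {-((2::int)^(J-k))..(2^(J-k)::int)}"
  have "card (anc k ` ({-(2^J)..2^J} \<times> {-(2^J)..(2^J::int)})) \<le> card ?B"
  proof (rule card_mono)
    show "finite ?B" by simp
    show "anc k ` ({-(2^J)..2^J} \<times> {-(2^J)..(2^J::int)}) \<subseteq> ?B" using anc_box[OF assms] by blast
  qed
  also have "card ?B = card {-((2::int)^(J-k))..2^(J-k)} * card {-((2::int)^(J-k))..2^(J-k)}"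
    by (simp add: card_cartesian_product)
  finally have c0: "card (anc k ` ({-(2^J)..2^J} \<times> {-(2^J)..(2^J::int)})) \<le> card {-((2::int)^(J-k))..2^(J-k)} * card {-((2::int)^(J-k))..2^(J-k)}" .
  have ci: "int (card {-((2::int)^(J-k))..2^(J-k)}) = 2 * 2^(J-k) + 1" by simp
  have cr: "real (card {-((2::int)^(J-k))..2^(J-k)}) = 2 * 2^(J-k) + 1"
    using arg_cong[OF ci, of real_of_int] by simp
  have c: "real (card (anc k ` ({-(2^J)..2^J} \<times> {-(2^J)..(2^J::int)}))) \<le> (2 * 2^(J-k) + 1)^2"
  proof -
    have "real (card (anc k ` ({-(2^J)..2^J} \<times> {-(2^J)..(2^J::int)}))) \<le> real (card {-((2::int)^(J-k))..2^(J-k)} * card {-((2::int)^(J-k))..2^(J-k)})"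
      using c0 by (simp only: of_nat_le_iff)
    also have "\<dots> = (2 * 2^(J-k) + 1)^2" by (simp only: of_nat_mult cr power2_eq_square)
    finally show ?thesis .
  qed
  have "(2 * 2^(J-k) + 1::real) \<le> 3 * 2^(J-k)" by simp
  then have "(2 * 2^(J-k) + 1::real)^2 \<le> (3 * 2^(J-k))^2" by (intro power_mono) auto
  also have "(3 * 2^(J-k)::real)^2 = 9 * (2^J / 2^k)\<^sup>2"
    using assms by (simp add: power_diff power_mult_distrib power_divide)
  finally show ?thesis using c by linarith
qed

lemma numeric:
  fixes v lam \<epsilon> lnn :: real
  assumes v: "v \<ge> 1" and l: "lnn \<ge> 1" and lam: "lam \<le> lnn / v^3" "lam \<ge> 0"
    and e: "\<epsilon> \<ge> 8 * lnn / v^2"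
  shows "7 * v * lam \<le> \<epsilon>" "2 / v^4 + 56 * lam / v \<le> \<epsilon>\<^sup>2"
proof -
  have vp: "v > 0" using v by simp
  have "7 * v * lam \<le> 7 * v * (lnn / v^3)" using lam vp by (intro mult_left_mono) auto
  also have "\<dots> = 7 * lnn / v^2" using vp by (simp add: field_simps power_eq_if)
  also have "\<dots> \<le> 8 * lnn / v^2" using l vp by (intro divide_right_mono) auto
  finally show "7 * v * lam \<le> \<epsilon>" using e by linarith
  have "56 * lam / v \<le> 56 * (lnn / v^3) / v" using lam vp by (intro divide_right_mono mult_left_mono) auto
  also have "\<dots> = 56 * lnn / v^4" using vp by (simp add: field_simps power_eq_if)
  finally have a: "56 * lam / v \<le> 56 * lnn / v^4" .
  have "lnn * 1 \<le> lnn * lnn" using l by (intro mult_left_mono) auto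
  then have b: "2 + 56 * lnn \<le> 64 * lnn^2" using l unfolding power2_eq_square by linarith
  have "2 / v^4 + 56 * lam / v \<le> (2 + 56 * lnn) / v^4" using a by (simp add: add_divide_distrib)
  also have "\<dots> \<le> 64 * lnn^2 / v^4" using b vp by (intro divide_right_mono) auto
  also have "64 * lnn^2 / v^4 = (8 * lnn / v^2)\<^sup>2" by (simp add: power2_eq_square field_simps power_eq_if)
  also have "\<dots> \<le> \<epsilon>\<^sup>2" using e l vp by (intro power_mono) auto
  finally show "2 / v^4 + 56 * lam / v \<le> \<epsilon>\<^sup>2" .
qed

lemma cost_sum:
  fixes D :: "nat \<Rightarrow> real" and lam :: real
  assumes D: "\<And>j. j < K \<Longrightarrow> D j \<le> 7 * (2^J / 2^j) * lam" and lam: "lam \<ge> 0"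
  shows "(\<Sum>j<K. 2 * (2^Suc j / 2^J)\<^sup>2 * D j) \<le> 56 * (2^K / 2^J) * lam"
proof -
  have "(\<Sum>j<K. 2 * (2^Suc j / 2^J)\<^sup>2 * D j) \<le> (\<Sum>j<K. 2 * (2^Suc j / 2^J)\<^sup>2 * (7 * (2^J / 2^j) * lam))"
    by (intro sum_mono mult_left_mono D) auto
  also have "\<dots> = (\<Sum>j<K. (56 * lam / 2^J) * 2^j)"
    by (intro sum.cong refl) (simp add: power2_eq_square field_simps)
  also have "\<dots> = (56 * lam / 2^J) * (2^K - 1)"
  proof -
    have g: "(\<Sum>j<K. (2::real)^j) = 2^K - 1" by (induction K) simp_all
    show ?thesis by (simp only: sum_distrib_left[symmetric] g)
  qed
  also have "\<dots> \<le> (56 * lam / 2^J) * 2^K" using lam by (intro mult_left_mono) auto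
  finally show ?thesis by (simp add: mult_ac)
qed

lemma Lfacts:
  fixes n :: real
  assumes n: "n \<ge> 1" and L: "L = nat \<lfloor>log 64 n\<rfloor>"
  shows "(2::real)^(6*L) \<le> n" "n < 64 * 2^(6*L)"
proof -
  have lg: "log 64 n \<ge> 0" using n by simp
  have rL: "real L = of_int \<lfloor>log 64 n\<rfloor>" using L lg by simp
  have p: "(2::real)^(6*L) = 64 powr (real L)"
    by (simp add: power_mult powr_realpow)
  have "64 powr (real L) \<le> 64 powr (log 64 n)" using rL by (intro powr_mono) auto
  also have "\<dots> = n" using n by simp
  finally show "(2::real)^(6*L) \<le> n" using p by simp
  have "n = 64 powr (log 64 n)" using n by simp
  also have "\<dots> < 64 powr (real L + 1)" using rL by (intro powr_less_mono) linarith+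
  also have "\<dots> = 64 * 2^(6*L)" using p by (simp add: powr_add)
  finally show "n < 64 * 2^(6*L)" .
qed

lemma ln_ge1: "real n \<ge> 3 \<Longrightarrow> ln (real n) \<ge> 1"
  using exp_le by (subst ln_ge_iff) auto

lemma tk_bound:
  fixes n c :: nat and q :: real
  assumes n: "real n \<ge> 3" and c: "real c \<le> 9 * q\<^sup>2" and q: "q \<ge> 1"
  shows "sqrt (2 * (c * ln 2 + 2 * ln n) / n) \<le> 7 * q * sqrt (ln n / n)"
proof -
  have l: "ln n \<ge> 1" using ln_ge1[OF n] .
  have q2: "q\<^sup>2 \<ge> 1" using q by (simp add: one_le_power)
  have "c * ln 2 \<le> 9 * q\<^sup>2 * 1" using c ln_2_less_1 by (intro mult_mono) auto
  also have "\<dots> \<le> 9 * q\<^sup>2 * ln n" using l q2 by (intro mult_left_mono) auto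
  finally have a: "c * ln 2 \<le> 9 * q\<^sup>2 * ln n" .
  have b: "2 * ln n \<le> 2 * q\<^sup>2 * ln n" using q2 l by simp
  define Z where "Z = q\<^sup>2 * ln n"
  have Z: "Z \<ge> 0" unfolding Z_def using l q2 by simp
  have a': "c * ln 2 \<le> 9 * Z" using a unfolding Z_def by (simp add: mult_ac)
  have b': "ln n \<le> Z" using b unfolding Z_def by simp
  have "2 * (c * ln 2 + 2 * ln n) \<le> 49 * Z" using a' b' Z by (smt (verit))
  then have "2 * (c * ln 2 + 2 * ln n) \<le> 49 * q\<^sup>2 * ln n" unfolding Z_def by (simp add: mult_ac)
  then have "2 * (c * ln 2 + 2 * ln n) / n \<le> (7 * q)\<^sup>2 * (ln n / n)"
    using n by (simp add: power_mult_distrib divide_right_mono)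
  then have "sqrt (2 * (c * ln 2 + 2 * ln n) / n) \<le> sqrt ((7 * q)\<^sup>2 * (ln n / n))"
    by (rule real_sqrt_le_mono)
  also have "\<dots> = 7 * q * sqrt (ln n / n)" unfolding real_sqrt_mult real_sqrt_abs using q by simp
  finally show ?thesis .
qed

lemma tk_prob:
  fixes n c :: nat
  assumes n: "n \<ge> 1"
  shows "2 ^ c * exp (- (n * (sqrt (2 * (c * ln 2 + 2 * ln n) / n))\<^sup>2 / 2)) = 1 / (real n)\<^sup>2"
proof -
  have nn: "0 \<le> 2 * (c * ln 2 + 2 * ln (real n)) / n" using n by auto
  define X where "X = 2 * (c * ln 2 + 2 * ln (real n)) / n"
  have "(sqrt X)\<^sup>2 = X" using nn unfolding X_def by (rule real_sqrt_pow2)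
  then have e: "n * (sqrt X)\<^sup>2 / 2 = c * ln 2 + 2 * ln n" using n unfolding X_def by simp
  moreover have "exp (- (c * ln 2 + 2 * ln (real n))) = 1 / (2 ^ c * (real n)\<^sup>2)"
  proof -
    have "exp (c * ln 2) = 2 ^ c" by (simp add: exp_of_nat_mult)
    moreover have "exp (2 * ln (real n)) = (real n)\<^sup>2"
    proof -
      have "exp (2 * ln (real n)) = exp (ln (real n)) ^ 2" using exp_of_nat_mult[of 2 "ln (real n)"] by simp
      also have "\<dots> = (real n)\<^sup>2" using n by simp
      finally show ?thesis .
    qed
    ultimately have "exp (c * ln 2 + 2 * ln (real n)) = 2 ^ c * (real n)\<^sup>2" by (simp only: exp_add)
    then show ?thesis by (simp only: exp_minus inverse_eq_divide)
  qed
  then show ?thesis unfolding X_def[symmetric] e by simp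
qed

lemma Suc_le_2pow: "Suc k \<le> 2 ^ k"
  by (induction k) auto

lemma main_n:
  fixes \<mu> :: "(real^2) measure" and X :: "(real^2) set" and n :: nat
  assumes P: "prob_space \<mu>" and sets_mu: "sets \<mu> = sets borel"
    and cX: "compact X" and dX: "diameter X \<le> 1" and mX: "emeasure \<mu> X = 1"
    and n3: "n \<ge> 3"
  shows "\<exists>E \<in> sets (PiM {..<n} (\<lambda>_. \<mu>)).
        E \<subseteq> {x \<in> space (PiM {..<n} (\<lambda>_. \<mu>)).
                 RPW 2 1 \<mu> (empirical n x) \<le> 32 * real n powr (-1/3) * (ln (real n)) powr 1} \<and>
        measure (PiM {..<n} (\<lambda>_. \<mu>)) E \<ge> 1 - real n powr (-1)"
proof -
  interpret prob_space \<mu> by fact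
  let ?M = "PiM {..<n} (\<lambda>_. \<mu>)"
  interpret M: prob_space ?M by (rule prob_space_PiM) (use P in auto)
  have n0: "n > 0" and rn3: "real n \<ge> 3" using n3 by auto
  have Xne: "X \<noteq> {}" using mX by auto
  then obtain x0 where x0: "x0 \<in> X" by auto
  have near: "\<bar>y$j - x0$j\<bar> \<le> 1" if y: "y \<in> X" for y j
  proof -
    have "\<bar>y$j - x0$j\<bar> = dist (y$j) (x0$j)" by (simp add: dist_real_def)
    also have "\<dots> \<le> dist y x0" by (rule dist_vec_nth_le)
    also have "\<dots> \<le> diameter X" by (rule diameter_bounded_bound[OF compact_imp_bounded[OF cX] y x0])
    finally show ?thesis using dX by linarith
  qed
  define SB where "SB J = {-(2^J)..(2^J::int)} \<times> {-(2^J)..(2^J::int)}" for J :: nat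
  have flo: "\<lfloor>2^J * t\<rfloor> \<in> {-(2^J)..(2^J::int)}" if t: "\<bar>t\<bar> \<le> 1" for J :: nat and t :: real
  proof -
    have t1: "-1 \<le> t" "t \<le> 1" using t by auto
    have "2^J * (-1) \<le> 2^J * t" using t1 by (intro mult_left_mono) auto
    then have a: "real_of_int (-(2^J)) \<le> 2^J * t" by simp
    have "2^J * t \<le> 2^J * 1" using t1 by (intro mult_left_mono) auto
    then have b: "2^J * t \<le> real_of_int (2^J)" by simp
    have c1: "-(2^J) \<le> \<lfloor>2^J * t\<rfloor>" using a by (simp only: le_floor_iff)
    have c2: "\<lfloor>2^J * t\<rfloor> \<le> 2^J" using b by (metis floor_mono floor_of_int)
    show ?thesis using c1 c2 by simp
  qed
  have cell_in: "cellJ J x0 y \<in> SB J" if "y \<in> X" for J y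
    using flo[OF near[OF that, of 1], of J] flo[OF near[OF that, of 2], of J]
    unfolding cellJ_def SB_def by auto
  have full: "measure \<mu> (cellJ J x0 -` SB J) = 1" for J
  proof -
    have pm: "cellJ J x0 -` SB J \<in> sets \<mu>"
      using measurable_sets[OF cellJ_meas, of "SB J" J x0] sets_mu by simp
    have "measure \<mu> X = 1" using mX by (simp add: emeasure_eq_measure)
    moreover have "measure \<mu> X \<le> measure \<mu> (cellJ J x0 -` SB J)"
      by (rule finite_measure_mono) (use cell_in pm in auto)
    ultimately show ?thesis using prob_le_1[of "cellJ J x0 -` SB J"] by linarith
  qed
  have finSB: "finite (SB J)" for J unfolding SB_def by simp
  define L where "L = nat \<lfloor>log 64 (real n)\<rfloor>"
  define J where "J = 2 * L"
  define K where "K = L"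
  define v where "v = (2::real)^L"
  have v1: "v \<ge> 1" unfolding v_def by simp
  have LF: "(2::real)^(6*L) \<le> real n" "real n < 64 * (2::real)^(6*L)" using Lfacts[of "real n" L] n3 L_def by auto
  have v6: "(2::real)^(6*L) = v^6" unfolding v_def by (simp add: power_mult[symmetric] mult.commute)
  have sq: "v^3 \<le> sqrt n"
  proof -
    have "v^3 = sqrt ((v^3)\<^sup>2)" using v1 by (simp only: real_sqrt_abs) simp
    also have "\<dots> \<le> sqrt n" using LF(1) v6 by (intro real_sqrt_le_mono) (simp add: power_mult[symmetric])
    finally show ?thesis .
  qed
  have cube: "real n powr (1/3) < 4 * v^2"
  proof (rule ccontr)
    assume "\<not> real n powr (1/3) < 4 * v^2"
    then have "4 * v^2 \<le> real n powr (1/3)" by simp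
    then have "(4 * v^2)^3 \<le> (real n powr (1/3))^3" by (intro power_mono) (use v1 in auto)
    also have "(real n powr (1/3))^3 = real n"
    proof -
      have "(real n powr (1/3))^3 = (real n powr (1/3)) powr (real 3)"
        using n0 by (subst powr_realpow) auto
      also have "\<dots> = real n" by (simp add: powr_powr)
      finally show ?thesis .
    qed
    finally have "64 * v^6 \<le> real n" by (simp add: power_mult_distrib power_mult[symmetric])
    then show False using LF(2) v6 by simp
  qed
  define lam where "lam = sqrt (ln n / n)"
  have lnn: "ln n \<ge> 1" by (rule ln_ge1[OF rn3])
  have lam0: "lam \<ge> 0" unfolding lam_def
    by (intro real_sqrt_ge_zero divide_nonneg_nonneg) (use lnn in auto)
  have lam_le: "lam \<le> ln n / v^3"
  proof -
    have x2: "ln (real n) * 1 \<le> ln (real n) * ln (real n)" using lnn by (intro mult_left_mono) auto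
    have "sqrt (ln n) \<le> sqrt ((ln n)\<^sup>2)" using x2 unfolding power2_eq_square
      by (intro real_sqrt_le_mono) simp
    also have "\<dots> = ln n" using lnn by (simp only: real_sqrt_abs)
    finally have s1: "sqrt (ln n) \<le> ln n" .
    have v3: "0 < v^3" using v1 by simp
    have "lam = sqrt (ln n) / sqrt n" unfolding lam_def by (rule real_sqrt_divide)
    also have "\<dots> \<le> ln n / v^3"
      by (rule frac_le[of "ln n" "sqrt (ln n)" "v^3" "sqrt n"]) (use lnn s1 v3 sq in auto)
    finally show ?thesis .
  qed
  define \<epsilon> where "\<epsilon> = 32 * real n powr (-1/3) * ln (real n)"
  have eps0: "\<epsilon> \<ge> 0" unfolding \<epsilon>_def using lnn by simp
  have eps_ge: "\<epsilon> \<ge> 8 * ln n / v^2"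
  proof -
    have pos: "real n powr (1/3) > 0" using n0 by simp
    have "real n powr (-1/3) = 1 / real n powr (1/3)"
      by (simp add: powr_minus_divide[symmetric])
    then have "\<epsilon> = 32 * ln n / real n powr (1/3)" unfolding \<epsilon>_def by simp
    also have "\<dots> \<ge> 32 * ln n / (4 * v^2)" using pos cube lnn v1 by (intro divide_left_mono) (auto intro!: mult_pos_pos)
    finally show ?thesis by simp
  qed
  note N = numeric[OF v1 lnn lam_le lam0 eps_ge]
  define p where "p = (\<lambda>c. measure \<mu> (cellJ J x0 -` {c}))"
  define tk where "tk k = sqrt (2 * (card (anc k ` SB J) * ln 2 + 2 * ln n) / n)" for k
  have tk0: "tk k \<ge> 0" for k unfolding tk_def using lnn by simp
  have KJ: "K \<le> J" unfolding K_def J_def by simp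
  have tk_le: "tk k \<le> 7 * (2^J / 2^k) * lam" if k: "k \<le> J" for k
  proof -
    have q: "(2::real)^J / 2^k \<ge> 1" using k by (simp add: power_increasing)
    show ?thesis unfolding tk_def lam_def
      by (rule tk_bound[OF rn3 _ q]) (use card_anc_box[OF k] in \<open>simp add: SB_def\<close>)
  qed
  have ev: "\<forall>k\<in>{..K}. \<exists>E\<in>sets ?M. (\<forall>x\<in>E. hm.Delta (SB J) n (cellJ J x0 \<circ> x) p k \<le> tk k) \<and>
        measure ?M (space ?M - E) \<le> 1 / (real n)\<^sup>2"
  proof
    fix k assume "k \<in> {..K}"
    from level_event[OF P sets_mu finSB full p_def n0 tk0, where k=k]
    obtain E where "E \<in> sets ?M" "\<forall>x\<in>E. hm.Delta (SB J) n (cellJ J x0 \<circ> x) p k \<le> tk k"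
      "measure ?M (space ?M - E) \<le> 2 ^ card (anc k ` SB J) * exp (- (n * (tk k)\<^sup>2 / 2))" by blast
    moreover have "2 ^ card (anc k ` SB J) * exp (- (n * (tk k)\<^sup>2 / 2)) = 1 / (real n)\<^sup>2"
      unfolding tk_def using tk_prob n0 by simp
    ultimately show "\<exists>E\<in>sets ?M. (\<forall>x\<in>E. hm.Delta (SB J) n (cellJ J x0 \<circ> x) p k \<le> tk k) \<and>
        measure ?M (space ?M - E) \<le> 1 / (real n)\<^sup>2" by auto
  qed
  then obtain Ek where Ek: "\<And>k. k \<in> {..K} \<Longrightarrow> Ek k \<in> sets ?M \<and> (\<forall>x\<in>Ek k. hm.Delta (SB J) n (cellJ J x0 \<circ> x) p k \<le> tk k) \<and>
        measure ?M (space ?M - Ek k) \<le> 1 / (real n)\<^sup>2"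
    by metis
  define E where "E = (\<Inter>k\<in>{..K}. Ek k)"
  have E_sets: "E \<in> sets ?M" unfolding E_def using Ek by (intro sets.finite_INT) auto
  have E_space: "E \<subseteq> space ?M" using sets.sets_into_space[OF E_sets] .
  have "measure ?M (space ?M - E) = measure ?M (\<Union>k\<in>{..K}. space ?M - Ek k)"
    unfolding E_def by (intro arg_cong[where f="measure ?M"]) auto
  also have "\<dots> \<le> (\<Sum>k\<in>{..K}. measure ?M (space ?M - Ek k))"
    by (rule measure_UNION_le) (use Ek in auto)
  also have "\<dots> \<le> (\<Sum>k\<in>{..K}. 1 / (real n)\<^sup>2)" by (intro sum_mono) (use Ek in auto)
  also have "\<dots> = real (Suc K) / (real n)\<^sup>2" by simp
  also have "\<dots> \<le> real n / (real n)\<^sup>2"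
  proof (intro divide_right_mono)
    have "real (Suc K) \<le> 2^K" using Suc_le_2pow[of K] by (metis of_nat_le_iff of_nat_numeral of_nat_power)
    also have "\<dots> \<le> (2::real)^(6*L)" unfolding K_def by (intro power_increasing) auto
    finally show "real (Suc K) \<le> real n" using LF(1) by linarith
  qed simp
  also have "\<dots> = real n powr (-1)" using n0 by (simp add: powr_minus power2_eq_square inverse_eq_divide)
  finally have bad: "measure ?M (space ?M - E) \<le> real n powr (-1)" .
  have prob: "measure ?M E \<ge> 1 - real n powr (-1)"
    using M.prob_compl[OF E_sets] bad by linarith
  have good: "RPW 2 1 \<mu> (empirical n x) \<le> \<epsilon>" if x: "x \<in> E" for x
  proof (cases "\<epsilon> \<ge> 1")
    case True then show ?thesis using RPW_le1[of \<mu> "empirical n x"] by linarith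
  next
    case False
    let ?D = "hm.Delta (SB J) n (cellJ J x0 \<circ> x) p"
    have D: "?D k \<le> 7 * (2^J / 2^k) * lam" if "k \<le> K" for k
      using Ek[of k] x that tk_le[of k] KJ unfolding E_def by force
    have JK: "(2::real)^J / 2^K = v" unfolding J_def K_def v_def by (simp add: power_mult[symmetric] mult_2 power_add)
    have KJ': "(2::real)^K / 2^J = 1 / v" unfolding J_def K_def v_def by (simp add: mult_2 power_add)
    have J2: "(1 / (2::real)^J)\<^sup>2 = 1 / v^4" unfolding J_def v_def by (simp add: power_mult[symmetric] power_divide)
    have DK: "?D K \<le> \<epsilon>" using D[of K] JK N(1) by simp
    have "(\<Sum>j<K. 2 * (2^Suc j / 2^J)\<^sup>2 * ?D j) \<le> 56 * (2^K / 2^J) * lam"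
      by (rule cost_sum) (use D lam0 in auto)
    then have Cst: "2 * (1 / 2^J)\<^sup>2 + (\<Sum>j<K. 2 * (2^Suc j / 2^J)\<^sup>2 * ?D j) \<le> \<epsilon>\<^sup>2"
      using N(2) KJ' J2 by simp
    have "partial_W 2 (1 - \<epsilon>) \<mu> (empirical n x) \<le> ennreal \<epsilon>"
      by (rule det_bound[OF P sets_mu finSB full n0 p_def DK Cst eps0]) (use False in simp)
    then show ?thesis using RPW_le[OF eps0] False by simp
  qed
  have "\<epsilon> = 32 * real n powr (-1/3) * (ln (real n)) powr 1" unfolding \<epsilon>_def using lnn by simp
  then show ?thesis using E_sets E_space good prob by (intro bexI[of _ E]) auto
qed

theorem lemma3p4:
  fixes \<mu> :: "(real^2) measure" and X :: "(real^2) set"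
  assumes "prob_space \<mu>" and "sets \<mu> = sets borel"
    and "absolutely_continuous lborel \<mu>"
    and "compact X" and "diameter X \<le> 1" and "emeasure \<mu> X = 1"
  shows "\<exists>C a c N. C > 0 \<and> a \<ge> 0 \<and> c > 0 \<and>
    (\<forall>n \<ge> N. \<exists>E \<in> sets (PiM {..<n} (\<lambda>_. \<mu>)).
        E \<subseteq> {x \<in> space (PiM {..<n} (\<lambda>_. \<mu>)).
                 RPW 2 1 \<mu> (empirical n x) \<le> C * real n powr (-1/3) * (ln (real n)) powr a} \<and>
        measure (PiM {..<n} (\<lambda>_. \<mu>)) E \<ge> 1 - real n powr (-c))"
proof -
  have "\<forall>n \<ge> 3. \<exists>E \<in> sets (PiM {..<n} (\<lambda>_. \<mu>)).
        E \<subseteq> {x \<in> space (PiM {..<n} (\<lambda>_. \<mu>)).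
                 RPW 2 1 \<mu> (empirical n x) \<le> 32 * real n powr (-1/3) * (ln (real n)) powr 1} \<and>
        measure (PiM {..<n} (\<lambda>_. \<mu>)) E \<ge> 1 - real n powr (-1)"
    using main_n[OF assms(1,2,4,5,6)] by blast
  then show ?thesis
    by (intro exI[of _ "32::real"] exI[of _ "1::real"] exI[of _ "1::real"] exI[of _ "3::nat"]) simp
qed

end
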